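(* Let $K$ be a division ring, $Q$ a finite quiver and $\boldsymbol{\sigma}\colon Q_1\to\operatorname{Aut}(K)$, $a\mapsto\sigma_a$, a function. If $Q$ is acyclic, then the semilinear path algebra $K_{\boldsymbol{\sigma}}Q$ is a hereditary $K$-ring.
   Context: A $K$-ring is a ring $A$ with a ring homomorphism $K\to A$. The semilinear path algebra $K_{\boldsymbol{\sigma}}Q$ is the $K$-ring generated by elements $e_v$ ($v\in Q_0$) and arrows $a\in Q_1$ subject to: $\sum_{v}e_v=1$, $e_ve_v=e_v$, $e_ue_v=0$ for $u\neq v$, $e_v\lambda=\lambda e_v$, $e_{h(a)}a=a=ae_{t(a)}$, and $a\lambda=\sigma_a(\lambda)a$ for all $\lambda\in K$, where $h(a),t(a)$ are the head and tail of $a$. *)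

theory Defs
  imports "HOL-Algebra.Module" "HOL-Algebra.AbelCoset" "HOL-Algebra.RingHom"
begin

text \<open>An arrow a goes from tl_q a to hd_q a. A list of arrows [a1,...,an]
  stands for the path a1 a2 ... an (composition written right to left, so
  a_i a_(i+1) requires tl_q a_i = hd_q a_(i+1)).\<close>

definition composable :: "'e set \<Rightarrow> ('e \<Rightarrow> 'v) \<Rightarrow> ('e \<Rightarrow> 'v) \<Rightarrow> 'e list \<Rightarrow> bool" where
  "composable Q1 hd_q tl_q as \<longleftrightarrow>
     set as \<subseteq> Q1 \<and> (\<forall>i. Suc i < length as \<longrightarrow> tl_q (as ! i) = hd_q (as ! Suc i))"

definition finite_quiver :: "'v set \<Rightarrow> 'e set \<Rightarrow> ('e \<Rightarrow> 'v) \<Rightarrow> ('e \<Rightarrow> 'v) \<Rightarrow> bool" where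
  "finite_quiver Q0 Q1 hd_q tl_q \<longleftrightarrow> finite Q0 \<and> finite Q1 \<and>
     (\<forall>a\<in>Q1. hd_q a \<in> Q0 \<and> tl_q a \<in> Q0)"

definition acyclic_quiver :: "'e set \<Rightarrow> ('e \<Rightarrow> 'v) \<Rightarrow> ('e \<Rightarrow> 'v) \<Rightarrow> bool" where
  "acyclic_quiver Q1 hd_q tl_q \<longleftrightarrow>
     (\<forall>as. as \<noteq> [] \<and> composable Q1 hd_q tl_q as \<longrightarrow> hd_q (hd as) \<noteq> tl_q (last as))"

text \<open>Paths are pairs (v, as): if as = [] this is the trivial path e_v at vertex v,
  otherwise it is the path as and v must be its head vertex.\<close>
definition valid_path :: "'v set \<Rightarrow> 'e set \<Rightarrow> ('e \<Rightarrow> 'v) \<Rightarrow> ('e \<Rightarrow> 'v) \<Rightarrow> 'v \<times> 'e list \<Rightarrow> bool" where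
  "valid_path Q0 Q1 hd_q tl_q p \<longleftrightarrow> fst p \<in> Q0 \<and> composable Q1 hd_q tl_q (snd p) \<and>
     (snd p \<noteq> [] \<longrightarrow> fst p = hd_q (hd (snd p)))"

definition path_head :: "'v \<times> 'e list \<Rightarrow> 'v" where
  "path_head p = fst p"

definition path_tail :: "('e \<Rightarrow> 'v) \<Rightarrow> 'v \<times> 'e list \<Rightarrow> 'v" where
  "path_tail tl_q p = (if snd p = [] then fst p else tl_q (last (snd p)))"

definition path_cat :: "'v \<times> 'e list \<Rightarrow> 'v \<times> 'e list \<Rightarrow> 'v \<times> 'e list" where
  "path_cat p q = (fst p, snd p @ snd q)"

text \<open>sigma_p = sigma_(a1) o ... o sigma_(an) for p = a1 ... an (identity on trivial paths),
  so that p * lambda = sigma_p(lambda) * p.\<close>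
definition path_sigma :: "('e \<Rightarrow> 'k \<Rightarrow> 'k) \<Rightarrow> 'v \<times> 'e list \<Rightarrow> 'k \<Rightarrow> 'k" where
  "path_sigma \<sigma> p = foldr (\<lambda>a f. \<sigma> a \<circ> f) (snd p) id"

definition ring_automorphism :: "('k::division_ring \<Rightarrow> 'k) \<Rightarrow> bool" where
  "ring_automorphism f \<longleftrightarrow> bij f \<and> f 1 = 1 \<and>
     (\<forall>x y. f (x + y) = f x + f y) \<and> (\<forall>x y. f (x * y) = f x * f y)"

text \<open>Concrete model of K_sigma Q: it is the free left K-module on the paths of Q
  (elements are finitely supported coefficient functions on valid paths,
  x = sum_p x(p) p), with multiplication determined by
  (lambda p)(mu q) = lambda sigma_p(mu) (p q) if tail p = head q, and 0 otherwise.
  The unit is sum_v e_v; K embeds via lambda |-> sum_v lambda e_v.\<close>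

definition path_alg_carrier ::
  "'v set \<Rightarrow> 'e set \<Rightarrow> ('e \<Rightarrow> 'v) \<Rightarrow> ('e \<Rightarrow> 'v) \<Rightarrow> ('v \<times> 'e list \<Rightarrow> 'k::division_ring) set" where
  "path_alg_carrier Q0 Q1 hd_q tl_q =
     {x. finite {p. x p \<noteq> 0} \<and> (\<forall>p. x p \<noteq> 0 \<longrightarrow> valid_path Q0 Q1 hd_q tl_q p)}"

definition path_alg_mult ::
  "('e \<Rightarrow> 'v) \<Rightarrow> ('e \<Rightarrow> 'k \<Rightarrow> 'k) \<Rightarrow> ('v \<times> 'e list \<Rightarrow> 'k::division_ring)
     \<Rightarrow> ('v \<times> 'e list \<Rightarrow> 'k) \<Rightarrow> ('v \<times> 'e list \<Rightarrow> 'k)" where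
  "path_alg_mult tl_q \<sigma> x y = (\<lambda>r.
     \<Sum>(p, q) \<in> {(p, q). x p \<noteq> 0 \<and> y q \<noteq> 0 \<and> path_tail tl_q p = path_head q \<and> path_cat p q = r}.
        x p * path_sigma \<sigma> p (y q))"

definition semilinear_path_algebra ::
  "'v set \<Rightarrow> 'e set \<Rightarrow> ('e \<Rightarrow> 'v) \<Rightarrow> ('e \<Rightarrow> 'v) \<Rightarrow> ('e \<Rightarrow> 'k \<Rightarrow> 'k)
     \<Rightarrow> ('v \<times> 'e list \<Rightarrow> 'k::division_ring) ring" where
  "semilinear_path_algebra Q0 Q1 hd_q tl_q \<sigma> =
     \<lparr> carrier = path_alg_carrier Q0 Q1 hd_q tl_q,
       mult = path_alg_mult tl_q \<sigma>,
       one = (\<lambda>p. if fst p \<in> Q0 \<and> snd p = [] then 1 else 0),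
       zero = (\<lambda>p. 0),
       add = (\<lambda>x y p. x p + y p) \<rparr>"

definition path_alg_scalar :: "'v set \<Rightarrow> 'k::division_ring \<Rightarrow> ('v \<times> 'e list \<Rightarrow> 'k)" where
  "path_alg_scalar Q0 c = (\<lambda>p. if fst p \<in> Q0 \<and> snd p = [] then c else 0)"

definition lmodule :: "('a, 'x) ring_scheme \<Rightarrow> ('a, 'm) module \<Rightarrow> bool" where
  "lmodule R M \<longleftrightarrow> ring R \<and> abelian_group M \<and>
     (\<forall>a\<in>carrier R. \<forall>x\<in>carrier M. a \<odot>\<^bsub>M\<^esub> x \<in> carrier M) \<and>
     (\<forall>a\<in>carrier R. \<forall>b\<in>carrier R. \<forall>x\<in>carrier M.
        (a \<oplus>\<^bsub>R\<^esub> b) \<odot>\<^bsub>M\<^esub> x = a \<odot>\<^bsub>M\<^esub> x \<oplus>\<^bsub>M\<^esub> b \<odot>\<^bsub>M\<^esub> x) \<and>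
     (\<forall>a\<in>carrier R. \<forall>x\<in>carrier M. \<forall>y\<in>carrier M.
        a \<odot>\<^bsub>M\<^esub> (x \<oplus>\<^bsub>M\<^esub> y) = a \<odot>\<^bsub>M\<^esub> x \<oplus>\<^bsub>M\<^esub> a \<odot>\<^bsub>M\<^esub> y) \<and>
     (\<forall>a\<in>carrier R. \<forall>b\<in>carrier R. \<forall>x\<in>carrier M.
        (a \<otimes>\<^bsub>R\<^esub> b) \<odot>\<^bsub>M\<^esub> x = a \<odot>\<^bsub>M\<^esub> (b \<odot>\<^bsub>M\<^esub> x)) \<and>
     (\<forall>x\<in>carrier M. \<one>\<^bsub>R\<^esub> \<odot>\<^bsub>M\<^esub> x = x)"

definition lmod_hom :: "('a, 'x) ring_scheme \<Rightarrow> ('a, 'm) module \<Rightarrow> ('a, 'n) module \<Rightarrow> ('m \<Rightarrow> 'n) set" where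
  "lmod_hom R M N = {f. f \<in> carrier M \<rightarrow> carrier N \<and>
     (\<forall>x\<in>carrier M. \<forall>y\<in>carrier M. f (x \<oplus>\<^bsub>M\<^esub> y) = f x \<oplus>\<^bsub>N\<^esub> f y) \<and>
     (\<forall>a\<in>carrier R. \<forall>x\<in>carrier M. f (a \<odot>\<^bsub>M\<^esub> x) = a \<odot>\<^bsub>N\<^esub> f x)}"

text \<open>Projectivity of P (lifting property), tested against left modules M, N whose
  carriers live in the types 'm and 'n. Since the main theorem is universally
  quantified over these type variables, this amounts to the usual definition.\<close>
definition projective_lmod ::
  "('a, 'x) ring_scheme \<Rightarrow> ('a, 'p) module \<Rightarrow> 'm itself \<Rightarrow> 'n itself \<Rightarrow> bool" where
  "projective_lmod R P (TYPE('m)) (TYPE('n)) \<longleftrightarrow> lmodule R P \<and>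
     (\<forall>(M::('a, 'm) module) (N::('a, 'n) module). lmodule R M \<and> lmodule R N \<longrightarrow>
       (\<forall>g\<in>lmod_hom R M N. g ` carrier M = carrier N \<longrightarrow>
         (\<forall>f\<in>lmod_hom R P N. \<exists>h\<in>lmod_hom R P M. \<forall>x\<in>carrier P. g (h x) = f x)))"

definition left_ideal :: "'a set \<Rightarrow> ('a, 'x) ring_scheme \<Rightarrow> bool" where
  "left_ideal I R \<longleftrightarrow> additive_subgroup I R \<and>
     (\<forall>a\<in>I. \<forall>x\<in>carrier R. x \<otimes>\<^bsub>R\<^esub> a \<in> I)"

definition ideal_lmod :: "('a, 'x) ring_scheme \<Rightarrow> 'a set \<Rightarrow> ('a, 'a) module" where
  "ideal_lmod R I = \<lparr> carrier = I, mult = mult R, one = one R, zero = zero R,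
                      add = add R, smult = mult R \<rparr>"

definition opposite_ring :: "'a ring \<Rightarrow> 'a ring" where
  "opposite_ring R = R\<lparr> mult := (\<lambda>x y. y \<otimes>\<^bsub>R\<^esub> x) \<rparr>"

definition left_hereditary :: "'a ring \<Rightarrow> 'm itself \<Rightarrow> 'n itself \<Rightarrow> bool" where
  "left_hereditary R tm tn \<longleftrightarrow> ring R \<and>
     (\<forall>I. left_ideal I R \<longrightarrow> projective_lmod R (ideal_lmod R I) tm tn)"

text \<open>Hereditary: left and right hereditary (right ideals of R are the left ideals
  of the opposite ring).\<close>
definition hereditary :: "'a ring \<Rightarrow> 'm itself \<Rightarrow> 'n itself \<Rightarrow> bool" where
  "hereditary R tm tn \<longleftrightarrow> left_hereditary R tm tn \<and> left_hereditary (opposite_ring R) tm tn"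

end

theory Submission
  imports Defs "HOL-Library.List_Lexorder" "HOL-Library.Product_Lexorder"
begin


lemma composable_sub:
  assumes "composable Q1 hd_q tl_q as"
  shows "composable Q1 hd_q tl_q (take k (drop i as))"
  using assms unfolding composable_def
  by (auto dest: in_set_takeD in_set_dropD)

lemma acyclic_length:
  assumes fq: "finite_quiver Q0 Q1 hd_q tl_q" and ac: "acyclic_quiver Q1 hd_q tl_q"
    and c: "composable Q1 hd_q tl_q as"
  shows "length as \<le> card Q0"
proof (cases "as = []")
  case True
  then show ?thesis by simp
next
  case False
  define n where "n = length as"
  define vtx where "vtx i = (if i < n then hd_q (as!i) else tl_q (last as))" for i
  have inQ1: "as ! i \<in> Q1" if "i < n" for i using c that unfolding composable_def n_def by auto
  have lastQ1: "last as \<in> Q1" using c False unfolding composable_def by auto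
  have vQ0: "vtx i \<in> Q0" for i using fq inQ1 lastQ1 unfolding finite_quiver_def vtx_def by auto
  have inj: "inj_on vtx {0..n}"
  proof (rule inj_onI, rule ccontr)
    fix i j assume ij: "i \<in> {0..n}" "j \<in> {0..n}" "vtx i = vtx j" "i \<noteq> j"
    have "\<exists>i j. i < j \<and> j \<le> n \<and> vtx i = vtx j"
      using ij by (metis atLeastAtMost_iff nat_neq_iff)
    then obtain i j where ij: "i < j" "j \<le> n" "vtx i = vtx j" by blast
    define bs where "bs = take (j - i) (drop i as)"
    have cb: "composable Q1 hd_q tl_q bs" unfolding bs_def by (rule composable_sub[OF c])
    have lb: "length bs = j - i" unfolding bs_def n_def using ij by (simp add: n_def)
    have bsne: "bs \<noteq> []" using lb ij by auto
    have hb: "hd bs = as ! i" unfolding bs_def using ij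
      by (simp add: hd_conv_nth n_def)
    have lbs: "last bs = as ! (j - 1)" unfolding bs_def using ij
      by (simp add: last_conv_nth n_def)
    have "hd_q (hd bs) = vtx i" using hb ij unfolding vtx_def by simp
    moreover have "tl_q (last bs) = vtx j"
    proof (cases "j < n")
      case True
      then have "tl_q (as ! (j-1)) = hd_q (as ! Suc (j-1))" using c ij unfolding composable_def n_def by auto
      then show ?thesis using lbs True ij unfolding vtx_def by simp
    next
      case False
      then have "j = n" using ij by simp
      then show ?thesis using lbs False False unfolding vtx_def n_def
        by (simp add: last_conv_nth \<open>as \<noteq> []\<close>)
    qed
    ultimately have "hd_q (hd bs) = tl_q (last bs)" using ij by simp
    then show False using ac cb bsne unfolding acyclic_quiver_def by blast
  qed
  have "card {0..n} \<le> card Q0"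
    using card_inj_on_le[OF inj] vQ0 fq unfolding finite_quiver_def by blast
  then show ?thesis unfolding n_def by simp
qed


lemma ring_aut_comp: "ring_automorphism f \<Longrightarrow> ring_automorphism g \<Longrightarrow> ring_automorphism (f \<circ> g)"
  unfolding ring_automorphism_def by (auto intro: bij_comp)

lemma ring_aut_id: "ring_automorphism id"
  unfolding ring_automorphism_def by auto

lemma ring_aut_foldr:
  "\<forall>a\<in>set as. ring_automorphism (\<sigma> a) \<Longrightarrow> ring_automorphism (foldr (\<lambda>a f. \<sigma> a \<circ> f) as id)"
  by (induction as) (auto intro: ring_aut_comp ring_aut_id)

lemma ring_aut_0: "ring_automorphism f \<Longrightarrow> f 0 = 0"
proof -
  assume "ring_automorphism f"
  then have "f (0 + 0) = f 0 + f 0" unfolding ring_automorphism_def by blast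
  then show "f 0 = 0" by simp
qed

lemma ring_aut_1: "ring_automorphism f \<Longrightarrow> f 1 = 1"
  unfolding ring_automorphism_def by simp

lemma ring_aut_add: "ring_automorphism f \<Longrightarrow> f (x + y) = f x + f y"
  unfolding ring_automorphism_def by simp

lemma ring_aut_mult: "ring_automorphism f \<Longrightarrow> f (x * y) = f x * f y"
  unfolding ring_automorphism_def by simp

lemma ring_aut_uminus: "ring_automorphism f \<Longrightarrow> f (- x) = - f x"
proof -
  assume a: "ring_automorphism f"
  have "f (- x) + f x = f (- x + x)" using ring_aut_add[OF a, of "-x" x] by simp
  also have "\<dots> = 0" using ring_aut_0[OF a] by simp
  finally show ?thesis by (simp add: eq_neg_iff_add_eq_0)
qed

lemma ring_aut_diff: "ring_automorphism f \<Longrightarrow> f (x - y) = f x - f y"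
  unfolding diff_conv_add_uminus by (simp only: ring_aut_add ring_aut_uminus)

lemma ring_aut_sum: "ring_automorphism f \<Longrightarrow> f (sum g A) = (\<Sum>a\<in>A. f (g a))"
  by (induction A rule: infinite_finite_induct) (auto simp: ring_aut_0 ring_aut_add)

lemma ring_aut_eq0: "ring_automorphism f \<Longrightarrow> (f x = 0) = (x = 0)"
proof -
  assume a: "ring_automorphism f"
  then have "inj f" unfolding ring_automorphism_def bij_def by blast
  then have "(f x = f 0) = (x = 0)" by (auto dest: injD)
  then show ?thesis using ring_aut_0[OF a] by simp
qed

lemma ring_aut_surj: "ring_automorphism f \<Longrightarrow> \<exists>x. f x = y"
proof -
  assume a: "ring_automorphism f"
  then have "surj f" unfolding ring_automorphism_def bij_def by blast
  then show ?thesis by (rule surjD[THEN exE]) (rule exI, rule sym)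
qed

locale spa =
  fixes Q0 :: "'v set" and Q1 :: "'e set" and hd_q tl_q :: "'e \<Rightarrow> 'v"
    and \<sigma> :: "'e \<Rightarrow> 'k::division_ring \<Rightarrow> 'k"
  assumes fq: "finite_quiver Q0 Q1 hd_q tl_q"
    and aut: "\<forall>a\<in>Q1. ring_automorphism (\<sigma> a)"
    and acyc: "acyclic_quiver Q1 hd_q tl_q"
begin

definition P where "P = {p. valid_path Q0 Q1 hd_q tl_q p}"
abbreviation "C \<equiv> path_alg_carrier Q0 Q1 hd_q tl_q"
abbreviation "R \<equiv> semilinear_path_algebra Q0 Q1 hd_q tl_q \<sigma>"
abbreviation "ptl \<equiv> path_tail tl_q"
abbreviation "sg \<equiv> path_sigma \<sigma>"

lemma finQ0: "finite Q0" and finQ1: "finite Q1" and arrQ0: "a \<in> Q1 \<Longrightarrow> hd_q a \<in> Q0 \<and> tl_q a \<in> Q0"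
  using fq unfolding finite_quiver_def by auto

lemma finite_P: "finite P"
proof -
  have "P \<subseteq> Q0 \<times> {as. set as \<subseteq> Q1 \<and> length as \<le> card Q0}"
  proof
    fix p assume "p \<in> P"
    then have "fst p \<in> Q0" "composable Q1 hd_q tl_q (snd p)" unfolding P_def valid_path_def by auto
    then show "p \<in> Q0 \<times> {as. set as \<subseteq> Q1 \<and> length as \<le> card Q0}"
      using acyclic_length[OF fq acyc] unfolding composable_def by (cases p) auto
  qed
  moreover have "finite (Q0 \<times> {as. set as \<subseteq> Q1 \<and> length as \<le> card Q0})"
    using finQ0 finQ1 finite_lists_length_le[of Q1 "card Q0"] by (intro finite_cartesian_product)
  ultimately show ?thesis by (rule finite_subset)
qed

lemma P_iff: "p \<in> P \<longleftrightarrow> valid_path Q0 Q1 hd_q tl_q p"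
  unfolding P_def by simp

lemma C_iff: "x \<in> C \<longleftrightarrow> (\<forall>p. x p \<noteq> 0 \<longrightarrow> p \<in> P)"
proof
  assume "\<forall>p. x p \<noteq> 0 \<longrightarrow> p \<in> P"
  then have "{p. x p \<noteq> 0} \<subseteq> P" by auto
  then show "x \<in> C" using finite_P \<open>\<forall>p. x p \<noteq> 0 \<longrightarrow> p \<in> P\<close>
    unfolding path_alg_carrier_def P_def by (auto intro: finite_subset)
qed (auto simp: path_alg_carrier_def P_def)

lemma C_out: "x \<in> C \<Longrightarrow> p \<notin> P \<Longrightarrow> x p = 0"
  using C_iff by blast

lemma sg_aut: "p \<in> P \<Longrightarrow> ring_automorphism (sg p)"
  unfolding path_sigma_def P_def valid_path_def composable_def
  using aut by (intro ring_aut_foldr) auto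

lemma foldr_comp_gen: "foldr (\<lambda>a f. (\<sigma>::'e \<Rightarrow> 'k \<Rightarrow> 'k) a \<circ> f) xs g = foldr (\<lambda>a f. \<sigma> a \<circ> f) xs id \<circ> g"
  by (induction xs) auto

lemma sg_cat: "sg (path_cat p q) = sg p \<circ> sg q"
  unfolding path_sigma_def path_cat_def snd_conv foldr_append by (rule foldr_comp_gen)

lemma sg_triv: "snd p = [] \<Longrightarrow> sg p = id"
  unfolding path_sigma_def by simp

definition mulf :: "('v \<times> 'e list \<Rightarrow> 'k) \<Rightarrow> ('v \<times> 'e list \<Rightarrow> 'k) \<Rightarrow> ('v \<times> 'e list \<Rightarrow> 'k)" where
  "mulf x y r = (\<Sum>p\<in>P. \<Sum>s\<in>P. if ptl p = fst s \<and> path_cat p s = r then x p * sg p (y s) else 0)"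

lemma mult_eq: assumes "x \<in> C" "y \<in> C" shows "path_alg_mult tl_q \<sigma> x y = mulf x y"
proof
  fix r
  let ?S = "{(p, q). x p \<noteq> 0 \<and> y q \<noteq> 0 \<and> ptl p = path_head q \<and> path_cat p q = r}"
  have "mulf x y r = (\<Sum>(p,s)\<in>P \<times> P. if ptl p = fst s \<and> path_cat p s = r then x p * sg p (y s) else 0)"
    unfolding mulf_def by (rule sum.cartesian_product)
  also have "\<dots> = (\<Sum>(p,s)\<in>?S. x p * sg p (y s))"
  proof (rule sum.mono_neutral_cong_right)
    show "finite (P \<times> P)" using finite_P by simp
    show "?S \<subseteq> P \<times> P" using assms unfolding C_iff by blast
    show "\<forall>i\<in>P \<times> P - ?S. (case i of (p, s) \<Rightarrow> if ptl p = fst s \<and> path_cat p s = r then x p * sg p (y s) else 0) = 0"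
    proof
      fix i assume i: "i \<in> P \<times> P - ?S"
      obtain p s where ps: "i = (p, s)" by (cases i)
      have "p \<in> P" using i ps by auto
      then have "sg p 0 = 0" using ring_aut_0[OF sg_aut] by blast
      then show "(case i of (p, s) \<Rightarrow> if ptl p = fst s \<and> path_cat p s = r then x p * sg p (y s) else 0) = 0"
        using i ps by (cases "y s = 0") (auto simp: path_head_def)
    qed
    show "\<And>i. i \<in> ?S \<Longrightarrow> (case i of (p, s) \<Rightarrow> if ptl p = fst s \<and> path_cat p s = r then x p * sg p (y s) else 0) = (case i of (p, s) \<Rightarrow> x p * sg p (y s))"
      by (clarsimp simp: path_head_def)
  qed
  finally show "path_alg_mult tl_q \<sigma> x y r = mulf x y r"
    unfolding path_alg_mult_def by (rule sym)
qed

end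


context spa begin

lemma P_fst: "p \<in> P \<Longrightarrow> fst p \<in> Q0"
  unfolding P_def valid_path_def by auto

lemma P_comp: "p \<in> P \<Longrightarrow> composable Q1 hd_q tl_q (snd p)"
  unfolding P_def valid_path_def by auto

lemma P_hd: "p \<in> P \<Longrightarrow> snd p \<noteq> [] \<Longrightarrow> fst p = hd_q (hd (snd p))"
  unfolding P_def valid_path_def by auto

lemma P_intro: "fst p \<in> Q0 \<Longrightarrow> composable Q1 hd_q tl_q (snd p) \<Longrightarrow> (snd p \<noteq> [] \<Longrightarrow> fst p = hd_q (hd (snd p))) \<Longrightarrow> p \<in> P"
  unfolding P_def valid_path_def by auto

lemma triv_P: "(v, []) \<in> P \<longleftrightarrow> v \<in> Q0"
  unfolding P_def valid_path_def composable_def by auto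

lemma ptl_Q0: assumes "p \<in> P" shows "ptl p \<in> Q0"
proof (cases "snd p = []")
  case True then show ?thesis using P_fst[OF assms] unfolding path_tail_def by simp
next
  case False
  then have "last (snd p) \<in> Q1" using P_comp[OF assms] unfolding composable_def by auto
  then show ?thesis using arrQ0 False unfolding path_tail_def by simp
qed

lemma fst_cat[simp]: "fst (path_cat p s) = fst p"
  unfolding path_cat_def by simp

lemma snd_cat[simp]: "snd (path_cat p s) = snd p @ snd s"
  unfolding path_cat_def by simp

lemma cat_assoc: "path_cat (path_cat p q) s = path_cat p (path_cat q s)"
  unfolding path_cat_def by simp

lemma ptl_cat: "ptl p = fst s \<Longrightarrow> ptl (path_cat p s) = ptl s"
  unfolding path_tail_def path_cat_def by auto

lemma composable_append:
  assumes "composable Q1 hd_q tl_q as" "composable Q1 hd_q tl_q bs"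
    and "as \<noteq> [] \<Longrightarrow> bs \<noteq> [] \<Longrightarrow> tl_q (last as) = hd_q (hd bs)"
  shows "composable Q1 hd_q tl_q (as @ bs)"
  unfolding composable_def
proof (intro conjI allI impI)
  show "set (as @ bs) \<subseteq> Q1" using assms unfolding composable_def by auto
  fix i assume i: "Suc i < length (as @ bs)"
  consider "Suc i < length as" | "Suc i = length as" | "length as \<le> i" by linarith
  then show "tl_q ((as @ bs) ! i) = hd_q ((as @ bs) ! Suc i)"
  proof cases
    case 1 then show ?thesis using assms(1) unfolding composable_def by (simp add: nth_append)
  next
    case 2
    then have ne: "as \<noteq> []" "bs \<noteq> []" using i by auto
    have "i = length as - 1" using 2 by simp
    then have "(as @ bs) ! i = last as" using 2 ne by (simp add: nth_append last_conv_nth)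
    moreover have "(as @ bs) ! Suc i = hd bs" using 2 ne by (simp add: nth_append hd_conv_nth)
    ultimately show ?thesis using assms(3) ne by simp
  next
    case 3
    then have "Suc (i - length as) < length bs" using i by auto
    then have "tl_q (bs ! (i - length as)) = hd_q (bs ! Suc (i - length as))"
      using assms(2) unfolding composable_def by blast
    moreover have "Suc i - length as = Suc (i - length as)" using 3 by auto
    ultimately show ?thesis using 3 by (simp add: nth_append)
  qed
qed

lemma cat_P: assumes "p \<in> P" "s \<in> P" "ptl p = fst s" shows "path_cat p s \<in> P"
proof (rule P_intro)
  show "fst (path_cat p s) \<in> Q0" using P_fst[OF assms(1)] by simp
  show "composable Q1 hd_q tl_q (snd (path_cat p s))"
    unfolding snd_cat
  proof (rule composable_append[OF P_comp[OF assms(1)] P_comp[OF assms(2)]])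
    assume "snd p \<noteq> []" "snd s \<noteq> []"
    then show "tl_q (last (snd p)) = hd_q (hd (snd s))"
      using assms(3) P_hd[OF assms(2)] unfolding path_tail_def by simp
  qed
  assume ne: "snd (path_cat p s) \<noteq> []"
  show "fst (path_cat p s) = hd_q (hd (snd (path_cat p s)))"
  proof (cases "snd p = []")
    case True
    then have "snd s \<noteq> []" using ne by simp
    then show ?thesis using True assms(3) P_hd[OF assms(2)] unfolding path_tail_def by simp
  next
    case False then show ?thesis using P_hd[OF assms(1)] by simp
  qed
qed

lemma cat_triv_left: "fst s = v \<Longrightarrow> path_cat (v, []) s = s"
  unfolding path_cat_def by (cases s) auto

lemma cat_triv_right: "path_cat p (v, []) = p"
  unfolding path_cat_def by (cases p) auto

lemma ptl_triv[simp]: "ptl (v, []) = v"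
  unfolding path_tail_def by simp

end


context spa begin

lemma if_mult_l: "(m::'k) * (if c then g else 0) = (if c then m * g else 0)" by simp
lemma if_mult_r: "(if c then g else 0) * (m::'k) = (if c then g * m else 0)" by simp

lemma sg_cat_app: "sg (path_cat p q) u = sg p (sg q u)"
  by (simp add: sg_cat)

lemma collapse:
  assumes "p \<in> P" "q \<in> P"
  shows "(\<Sum>a\<in>P. if ptl p = fst q \<and> path_cat p q = a then F a else 0) = (if ptl p = fst q then F (path_cat p q) else 0)"
proof (cases "ptl p = fst q")
  case True
  then have "path_cat p q \<in> P" using cat_P assms by blast
  then show ?thesis using True finite_P by (simp add: sum.delta)
qed simp

lemma collapse3:
  "(\<Sum>a\<in>P. \<Sum>p\<in>P. \<Sum>q\<in>P. if ptl p = fst q \<and> path_cat p q = a then H a p q else 0)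
   = (\<Sum>p\<in>P. \<Sum>q\<in>P. if ptl p = fst q then H (path_cat p q) p q else 0)"
proof -
  have "(\<Sum>a\<in>P. \<Sum>p\<in>P. \<Sum>q\<in>P. if ptl p = fst q \<and> path_cat p q = a then H a p q else 0)
      = (\<Sum>p\<in>P. \<Sum>a\<in>P. \<Sum>q\<in>P. if ptl p = fst q \<and> path_cat p q = a then H a p q else 0)"
    by (rule sum.swap)
  also have "\<dots> = (\<Sum>p\<in>P. \<Sum>q\<in>P. \<Sum>a\<in>P. if ptl p = fst q \<and> path_cat p q = a then H a p q else 0)"
    by (intro sum.cong refl sum.swap)
  also have "\<dots> = (\<Sum>p\<in>P. \<Sum>q\<in>P. if ptl p = fst q then H (path_cat p q) p q else 0)"
    by (intro sum.cong refl) (rule collapse)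
  finally show ?thesis .
qed

lemma mulf_C: assumes "x \<in> C" "y \<in> C" shows "mulf x y \<in> C"
  unfolding C_iff
proof (intro allI impI)
  fix r assume nz: "mulf x y r \<noteq> 0"
  show "r \<in> P"
  proof (rule ccontr)
    assume "r \<notin> P"
    then have "\<forall>p\<in>P. \<forall>s\<in>P. \<not> (ptl p = fst s \<and> path_cat p s = r)" using cat_P by blast
    then have "mulf x y r = 0" unfolding mulf_def by (intro sum.neutral ballI) auto
    then show False using nz by simp
  qed
qed

lemma sg_mulf:
  assumes "p \<in> P"
  shows "sg p (mulf y z b) = (\<Sum>q\<in>P. \<Sum>s\<in>P. if ptl q = fst s \<and> path_cat q s = b then sg p (y q) * sg p (sg q (z s)) else 0)"
proof -
  have a: "ring_automorphism (sg p)" using sg_aut[OF assms] .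
  have m: "sg p (u * v) = sg p u * sg p v" for u v using ring_aut_mult[OF a] .
  have z: "sg p 0 = 0" using ring_aut_0[OF a] .
  show ?thesis unfolding mulf_def ring_aut_sum[OF a]
    by (intro sum.cong refl) (simp add: m z)
qed

lemma mulf_assoc:
  assumes x: "x \<in> C" and y: "y \<in> C" and z: "z \<in> C"
  shows "mulf (mulf x y) z = mulf x (mulf y z)"
proof
  fix r
  define W where "W a = (\<Sum>s\<in>P. if ptl a = fst s \<and> path_cat a s = r then sg a (z s) else 0)" for a
  define T where "T = (\<Sum>p\<in>P. \<Sum>q\<in>P. \<Sum>s\<in>P. if ptl p = fst q then (if ptl q = fst s \<and> path_cat p (path_cat q s) = r then x p * sg p (y q) * sg p (sg q (z s)) else 0) else 0)"
  have "mulf (mulf x y) z r = (\<Sum>a\<in>P. mulf x y a * W a)"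
    unfolding mulf_def[of "mulf x y" z] W_def
    by (intro sum.cong refl) (simp add: sum_distrib_left if_mult_l)
  also have "\<dots> = (\<Sum>a\<in>P. \<Sum>p\<in>P. \<Sum>q\<in>P. if ptl p = fst q \<and> path_cat p q = a then x p * sg p (y q) * W a else 0)"
    unfolding mulf_def[of x y]
    by (intro sum.cong refl) (simp add: sum_distrib_right if_mult_r)
  also have "\<dots> = (\<Sum>p\<in>P. \<Sum>q\<in>P. if ptl p = fst q then x p * sg p (y q) * W (path_cat p q) else 0)"
    by (rule collapse3)
  also have "\<dots> = T"
    unfolding T_def
  proof (intro sum.cong refl)
    fix p q assume "p \<in> P" "q \<in> P"
    show "(if ptl p = fst q then x p * sg p (y q) * W (path_cat p q) else 0) =
      (\<Sum>s\<in>P. if ptl p = fst q then (if ptl q = fst s \<and> path_cat p (path_cat q s) = r then x p * sg p (y q) * sg p (sg q (z s)) else 0) else 0)"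
    proof (cases "ptl p = fst q")
      case True
      have e: "sg (path_cat p q) u = sg p (sg q u)" for u by (rule sg_cat_app)
      have t: "ptl (path_cat p q) = ptl q" using True by (rule ptl_cat)
      show ?thesis unfolding W_def e t cat_assoc
        using True by (simp add: sum_distrib_left if_mult_l)
    qed simp
  qed
  finally have L: "mulf (mulf x y) z r = T" .
  have "mulf x (mulf y z) r = (\<Sum>p\<in>P. \<Sum>b\<in>P. \<Sum>q\<in>P. \<Sum>s\<in>P. if ptl q = fst s \<and> path_cat q s = b then
           (if ptl p = fst b \<and> path_cat p b = r then x p * (sg p (y q) * sg p (sg q (z s))) else 0) else 0)"
    unfolding mulf_def[of x "mulf y z"]
  proof (intro sum.cong refl)
    fix p b assume "p \<in> P" "b \<in> P"
    show "(if ptl p = fst b \<and> path_cat p b = r then x p * sg p (mulf y z b) else 0) =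
      (\<Sum>q\<in>P. \<Sum>s\<in>P. if ptl q = fst s \<and> path_cat q s = b then
           (if ptl p = fst b \<and> path_cat p b = r then x p * (sg p (y q) * sg p (sg q (z s))) else 0) else 0)"
    proof (cases "ptl p = fst b \<and> path_cat p b = r")
      case True
      have "x p * sg p (mulf y z b) = (\<Sum>q\<in>P. \<Sum>s\<in>P. if ptl q = fst s \<and> path_cat q s = b then
           x p * (sg p (y q) * sg p (sg q (z s))) else 0)"
        unfolding sg_mulf[OF \<open>p \<in> P\<close>] by (simp add: sum_distrib_left if_mult_l)
      then show ?thesis using True by (simp cong: if_cong)
    next
      case False
      then have c: "(ptl p = fst b \<and> path_cat p b = r) = False" by simp
      show ?thesis unfolding c if_False by simp
    qed
  qed
  also have "\<dots> = (\<Sum>p\<in>P. \<Sum>q\<in>P. \<Sum>s\<in>P. if ptl q = fst s then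
           (if ptl p = fst (path_cat q s) \<and> path_cat p (path_cat q s) = r then x p * (sg p (y q) * sg p (sg q (z s))) else 0) else 0)"
    by (rule sum.cong[OF refl], rule collapse3)
  also have "\<dots> = T"
    unfolding T_def
    by (intro sum.cong refl) (auto simp: mult.assoc)
  finally show "mulf (mulf x y) z r = mulf x (mulf y z) r" using L by simp
qed

end


context spa begin

definition oneR :: "'v \<times> 'e list \<Rightarrow> 'k" where
  "oneR p = (if fst p \<in> Q0 \<and> snd p = [] then 1 else 0)"

lemma R_simps[simp]: "carrier R = C" "one R = oneR" "zero R = (\<lambda>p. 0)"
  "add R = (\<lambda>x y p. x p + y p)" "mult R = path_alg_mult tl_q \<sigma>"
  unfolding semilinear_path_algebra_def oneR_def by (auto intro!: ext)

lemma oneR_C: "oneR \<in> C"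
  unfolding C_iff oneR_def using triv_P by (auto simp: prod_eq_iff)

lemma add_C: "x \<in> C \<Longrightarrow> y \<in> C \<Longrightarrow> (\<lambda>p. x p + y p) \<in> C"
  unfolding C_iff by (metis add.right_neutral)

lemma zero_C: "(\<lambda>p. 0) \<in> C"
  unfolding C_iff by auto

lemma neg_C: "x \<in> C \<Longrightarrow> (\<lambda>p. - x p) \<in> C"
  unfolding C_iff by auto

lemma mulf_one_left: assumes x: "x \<in> C" shows "mulf oneR x = x"
proof
  fix r
  have "mulf oneR x r = (\<Sum>p\<in>P. \<Sum>s\<in>P. if p = (fst s, []) \<and> s = r then x s else 0)"
    unfolding mulf_def
  proof (intro sum.cong refl)
    fix p s assume p: "p \<in> P" and s: "s \<in> P"
    show "(if ptl p = fst s \<and> path_cat p s = r then oneR p * sg p (x s) else 0) =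
          (if p = (fst s, []) \<and> s = r then x s else 0)"
    proof (cases "snd p = []")
      case True
      then obtain v where pv: "p = (v, [])" by (cases p) auto
      then have "v \<in> Q0" using p triv_P by simp
      then show ?thesis using pv cat_triv_left[of s v] sg_triv[of p] unfolding oneR_def by auto
    next
      case False
      then show ?thesis unfolding oneR_def by auto
    qed
  qed
  also have "\<dots> = (\<Sum>s\<in>P. \<Sum>p\<in>P. if p = (fst s, []) \<and> s = r then x s else 0)"
    by (rule sum.swap)
  also have "\<dots> = (\<Sum>s\<in>P. if s = r then x s else 0)"
  proof (intro sum.cong refl)
    fix s assume s: "s \<in> P"
    then have "(fst s, []) \<in> P" using triv_P P_fst by blast
    then show "(\<Sum>p\<in>P. if p = (fst s, []) \<and> s = r then x s else 0) = (if s = r then x s else 0)"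
      using finite_P by (cases "s = r") (simp_all add: sum.delta')
  qed
  also have "\<dots> = x r"
    using finite_P C_out[OF x] by (cases "r \<in> P") (simp_all add: sum.delta')
  finally show "mulf oneR x r = x r" .
qed

lemma mulf_one_right: assumes x: "x \<in> C" shows "mulf x oneR = x"
proof
  fix r
  have "mulf x oneR r = (\<Sum>p\<in>P. \<Sum>s\<in>P. if s = (ptl p, []) \<and> p = r then x p else 0)"
    unfolding mulf_def
  proof (intro sum.cong refl)
    fix p s assume p: "p \<in> P" and s: "s \<in> P"
    show "(if ptl p = fst s \<and> path_cat p s = r then x p * sg p (oneR s) else 0) =
          (if s = (ptl p, []) \<and> p = r then x p else 0)"
    proof (cases "snd s = []")
      case True
      then obtain v where sv: "s = (v, [])" by (cases s) auto
      then have "v \<in> Q0" using s triv_P by simp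
      then show ?thesis using sv cat_triv_right[of p v] ring_aut_1[OF sg_aut[OF p]] unfolding oneR_def by auto
    next
      case False
      then have "s \<noteq> (ptl p, [])" by auto
      then show ?thesis unfolding oneR_def using ring_aut_0[OF sg_aut[OF p]] False by auto
    qed
  qed
  also have "\<dots> = (\<Sum>p\<in>P. if p = r then x p else 0)"
  proof (intro sum.cong refl)
    fix p assume p: "p \<in> P"
    then have "(ptl p, []) \<in> P" using triv_P ptl_Q0 by blast
    then show "(\<Sum>s\<in>P. if s = (ptl p, []) \<and> p = r then x p else 0) = (if p = r then x p else 0)"
      using finite_P by (cases "p = r") (simp_all add: sum.delta')
  qed
  also have "\<dots> = x r"
    using finite_P C_out[OF x] by (cases "r \<in> P") (simp_all add: sum.delta')
  finally show "mulf x oneR r = x r" .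
qed

lemma mulf_distl: assumes "x \<in> C" "y \<in> C" "z \<in> C"
  shows "mulf (\<lambda>p. x p + y p) z = (\<lambda>r. mulf x z r + mulf y z r)"
  unfolding mulf_def by (auto simp: sum.distrib[symmetric] distrib_right intro!: ext sum.cong)

lemma mulf_distr: assumes "x \<in> C" "y \<in> C" "z \<in> C"
  shows "mulf z (\<lambda>p. x p + y p) = (\<lambda>r. mulf z x r + mulf z y r)"
  unfolding mulf_def
  by (auto simp: sum.distrib[symmetric] distrib_left ring_aut_add[OF sg_aut] intro!: ext sum.cong)

lemma ring_R: "ring R"
proof (rule ringI)
  show "abelian_group R"
    by (rule abelian_groupI) (auto simp: add_C zero_C add.assoc add.commute intro!: bexI[OF _ neg_C])
  show "monoid R"
    by (rule monoidI) (auto simp: mult_eq mulf_C oneR_C mulf_assoc mulf_one_left mulf_one_right)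
  show "\<And>x y z. x \<in> carrier R \<Longrightarrow> y \<in> carrier R \<Longrightarrow> z \<in> carrier R \<Longrightarrow>
    (x \<oplus>\<^bsub>R\<^esub> y) \<otimes>\<^bsub>R\<^esub> z = x \<otimes>\<^bsub>R\<^esub> z \<oplus>\<^bsub>R\<^esub> y \<otimes>\<^bsub>R\<^esub> z"
    by (simp add: mult_eq add_C mulf_distl)
  show "\<And>x y z. x \<in> carrier R \<Longrightarrow> y \<in> carrier R \<Longrightarrow> z \<in> carrier R \<Longrightarrow>
    z \<otimes>\<^bsub>R\<^esub> (x \<oplus>\<^bsub>R\<^esub> y) = z \<otimes>\<^bsub>R\<^esub> x \<oplus>\<^bsub>R\<^esub> z \<otimes>\<^bsub>R\<^esub> y"
    by (simp add: mult_eq add_C mulf_distr)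
qed

end


lemma list_less_append_same: "length xs = length ys \<Longrightarrow> (xs::nat list) < ys \<Longrightarrow> xs @ zs < ys @ ws"
proof (induction xs arbitrary: ys)
  case Nil then show ?case by simp
next
  case (Cons a xs)
  then obtain b ys' where ys: "ys = b # ys'" by (cases ys) auto
  show ?case using Cons ys by auto
qed

lemma list_less_prefix: "(ys::nat list) < zs \<Longrightarrow> xs @ ys < xs @ zs"
  by (induction xs) auto

context spa begin

definition af :: "'e \<Rightarrow> nat" where "af = (SOME f. inj_on f Q1)"
definition vf :: "'v \<Rightarrow> nat" where "vf = (SOME f. inj_on f Q0)"

lemma af_inj: "inj_on af Q1"
proof -
  have "\<exists>f::'e \<Rightarrow> nat. inj_on f Q1" using finite_imp_inj_to_nat_seg[OF finQ1] by blast
  then show ?thesis unfolding af_def by (rule someI_ex)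
qed

lemma vf_inj: "inj_on vf Q0"
proof -
  have "\<exists>f::'v \<Rightarrow> nat. inj_on f Q0" using finite_imp_inj_to_nat_seg[OF finQ0] by blast
  then show ?thesis unfolding vf_def by (rule someI_ex)
qed

definition key :: "'v \<times> 'e list \<Rightarrow> nat \<times> nat list \<times> nat" where
  "key p = (length (snd p), map af (snd p), vf (fst p))"

lemma P_set: "p \<in> P \<Longrightarrow> set (snd p) \<subseteq> Q1"
  using P_comp unfolding composable_def by blast

lemma map_af_inj: "p \<in> P \<Longrightarrow> p' \<in> P \<Longrightarrow> map af (snd p) = map af (snd p') \<Longrightarrow> snd p = snd p'"
  using inj_on_map_eq_map[of af "snd p" "snd p'"] af_inj P_set
  by (metis inj_on_subset le_sup_iff)

lemma key_inj: assumes "p \<in> P" "p' \<in> P" "key p = key p'" shows "p = p'"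
proof -
  have "snd p = snd p'" using map_af_inj assms unfolding key_def by auto
  moreover have "vf (fst p) = vf (fst p')" using assms unfolding key_def by auto
  then have "fst p = fst p'" using inj_onD[OF vf_inj _ P_fst[OF assms(1)] P_fst[OF assms(2)]] by blast
  ultimately show ?thesis by (simp add: prod_eq_iff)
qed

lemma key_cat: "key (path_cat a b) = (length (snd a) + length (snd b), map af (snd a) @ map af (snd b), vf (fst a))"
  unfolding key_def by simp

lemma triv_unique: "p \<in> P \<Longrightarrow> snd p = [] \<Longrightarrow> p = (ptl p, [])"
  unfolding path_tail_def by (simp add: prod_eq_iff)

lemma triv_unique2: "p \<in> P \<Longrightarrow> snd p = [] \<Longrightarrow> p = (fst p, [])"
  by (simp add: prod_eq_iff)

lemma same_snd: "p \<in> P \<Longrightarrow> p' \<in> P \<Longrightarrow> snd p = snd p' \<Longrightarrow> snd p \<noteq> [] \<Longrightarrow> p = p'"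
  using P_hd by (metis prod_eq_iff)

lemma mono_cat:
  assumes P: "a \<in> P" "a' \<in> P" "b \<in> P" "b' \<in> P"
    and v: "ptl a = v" "ptl a' = v" "fst b = v" "fst b' = v"
    and le: "key a \<le> key a'" "key b \<le> key b'" and ne: "(a, b) \<noteq> (a', b')"
  shows "key (path_cat a b) < key (path_cat a' b')"
proof -
  have la: "length (snd a) \<le> length (snd a')" using le(1) unfolding key_def less_eq_prod_def by auto
  have lb: "length (snd b) \<le> length (snd b')" using le(2) unfolding key_def less_eq_prod_def by auto
  show ?thesis
  proof (cases "length (snd a) + length (snd b) < length (snd a') + length (snd b')")
    case True then show ?thesis unfolding key_cat less_prod_def by simp
  next
    case False
    then have la': "length (snd a) = length (snd a')" and lb': "length (snd b) = length (snd b')"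
      using la lb by auto
    show ?thesis
    proof (cases "a = a'")
      case False
      have sa: "snd a \<noteq> []"
      proof
        assume "snd a = []"
        then have "snd a' = []" using la' by simp
        then have "a' = (v, [])" using triv_unique[OF P(2)] v by simp
        moreover have "a = (v, [])" using triv_unique[OF P(1)] v \<open>snd a = []\<close> by simp
        ultimately show False using False by simp
      qed
      have "map af (snd a) \<noteq> map af (snd a')"
        using map_af_inj[OF P(1,2)] same_snd[OF P(1,2)] sa False by blast
      moreover have "map af (snd a) \<le> map af (snd a')" using le(1) la' unfolding key_def less_eq_prod_def by auto
      ultimately have "map af (snd a) < map af (snd a')" by simp
      then have "map af (snd a) @ map af (snd b) < map af (snd a') @ map af (snd b')"
        using la' by (intro list_less_append_same) auto
      then show ?thesis unfolding key_cat less_prod_def using la' lb' by simp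
    next
      case True
      then have bb: "b \<noteq> b'" using ne by simp
      have sb: "snd b \<noteq> []"
      proof
        assume "snd b = []"
        then have "snd b' = []" using lb' by simp
        then have "b' = (v, [])" using triv_unique2[OF P(4)] v by simp
        moreover have "b = (v, [])" using triv_unique2[OF P(3)] v \<open>snd b = []\<close> by simp
        ultimately show False using bb by simp
      qed
      have "map af (snd b) \<noteq> map af (snd b')"
        using map_af_inj[OF P(3,4)] same_snd[OF P(3,4)] sb bb by blast
      moreover have "map af (snd b) \<le> map af (snd b')"
        using le(2) lb' unfolding key_def less_eq_prod_def by auto
      ultimately have "map af (snd b) < map af (snd b')" by simp
      then have "map af (snd a) @ map af (snd b) < map af (snd a') @ map af (snd b')"
        using True by (simp add: list_less_prefix)
      then show ?thesis unfolding key_cat less_prod_def using la' lb' True by simp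
    qed
  qed
qed

lemma mono_cat_le:
  assumes P: "a \<in> P" "a' \<in> P" "b \<in> P" "b' \<in> P"
    and v: "ptl a = v" "ptl a' = v" "fst b = v" "fst b' = v"
    and le: "key a \<le> key a'" "key b \<le> key b'"
  shows "key (path_cat a b) \<le> key (path_cat a' b')"
  using mono_cat[OF assms] by (cases "(a, b) = (a', b')") auto

definition lt :: "('v \<times> 'e list \<Rightarrow> 'k) \<Rightarrow> 'v \<times> 'e list" where
  "lt x = (SOME p. x p \<noteq> 0 \<and> (\<forall>p'. x p' \<noteq> 0 \<longrightarrow> key p' \<le> key p))"

lemma lt_ex: assumes x: "x \<in> C" and nz: "x \<noteq> (\<lambda>p. 0)"
  shows "\<exists>p. x p \<noteq> 0 \<and> (\<forall>p'. x p' \<noteq> 0 \<longrightarrow> key p' \<le> key p)"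
proof -
  define S where "S = {p. x p \<noteq> 0}"
  have "S \<subseteq> P" using x unfolding C_iff S_def by blast
  then have fS: "finite S" using finite_P by (rule finite_subset)
  have neS: "S \<noteq> {}" using nz unfolding S_def by auto
  have "Max (key ` S) \<in> key ` S" using fS neS by simp
  then obtain p where p: "p \<in> S" "key p = Max (key ` S)" by auto
  have "\<forall>p'. x p' \<noteq> 0 \<longrightarrow> key p' \<le> key p" using p fS unfolding S_def by auto
  moreover have "x p \<noteq> 0" using p unfolding S_def by auto
  ultimately show ?thesis by blast
qed

lemma lt: assumes x: "x \<in> C" and nz: "x \<noteq> (\<lambda>p. 0)"
  shows "x (lt x) \<noteq> 0" "\<And>p'. x p' \<noteq> 0 \<Longrightarrow> key p' \<le> key (lt x)" "lt x \<in> P"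
proof -
  have "x (lt x) \<noteq> 0 \<and> (\<forall>p'. x p' \<noteq> 0 \<longrightarrow> key p' \<le> key (lt x))"
    unfolding lt_def using lt_ex[OF assms] by (rule someI_ex)
  then show "x (lt x) \<noteq> 0" "\<And>p'. x p' \<noteq> 0 \<Longrightarrow> key p' \<le> key (lt x)" by auto
  then show "lt x \<in> P" using x C_iff by blast
qed

lemma lt_unique: assumes x: "x \<in> C" and p: "x p \<noteq> 0" and m: "\<forall>p'. x p' \<noteq> 0 \<longrightarrow> key p' \<le> key p"
  shows "lt x = p"
proof -
  have nz: "x \<noteq> (\<lambda>p. 0)" using p by auto
  have "key (lt x) \<le> key p" using m lt(1)[OF x nz] by blast
  moreover have "key p \<le> key (lt x)" using lt(2)[OF x nz p] .
  ultimately have "key (lt x) = key p" by simp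
  then show ?thesis using key_inj lt(3)[OF x nz] p x C_iff by blast
qed

definition mon :: "'k \<Rightarrow> 'v \<times> 'e list \<Rightarrow> ('v \<times> 'e list \<Rightarrow> 'k)" where
  "mon c w = (\<lambda>p. if p = w then c else 0)"

lemma mon_C: "w \<in> P \<Longrightarrow> mon c w \<in> C"
  unfolding mon_def C_iff by auto

lemma lt_mon: "w \<in> P \<Longrightarrow> c \<noteq> 0 \<Longrightarrow> lt (mon c w) = w"
  by (rule lt_unique[OF mon_C]) (auto simp: mon_def)

lemma mon_nz: "c \<noteq> 0 \<Longrightarrow> mon c w \<noteq> (\<lambda>p. 0)"
  unfolding mon_def by (metis)

lemma mulf_support: assumes "mulf r u p \<noteq> 0"
  shows "\<exists>a\<in>P. \<exists>s\<in>P. r a \<noteq> 0 \<and> u s \<noteq> 0 \<and> ptl a = fst s \<and> path_cat a s = p"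
proof (rule ccontr)
  assume "\<not> ?thesis"
  then have "\<forall>a\<in>P. \<forall>s\<in>P. (if ptl a = fst s \<and> path_cat a s = p then r a * sg a (u s) else 0) = 0"
    using ring_aut_0[OF sg_aut] by fastforce
  then have "mulf r u p = 0" unfolding mulf_def by simp
  then show False using assms by simp
qed

lemma lead_mult:
  assumes r: "r \<in> C" and u: "u \<in> C" and rnz: "r \<noteq> (\<lambda>p. 0)" and unz: "u \<noteq> (\<lambda>p. 0)"
    and hr: "\<forall>p. r p \<noteq> 0 \<longrightarrow> ptl p = v" and hu: "\<forall>s. u s \<noteq> 0 \<longrightarrow> fst s = v"
  shows "mulf r u (path_cat (lt r) (lt u)) = r (lt r) * sg (lt r) (u (lt u))"
    and "\<And>p. mulf r u p \<noteq> 0 \<Longrightarrow> key p \<le> key (path_cat (lt r) (lt u))"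
    and "r (lt r) * sg (lt r) (u (lt u)) \<noteq> 0"
    and "path_cat (lt r) (lt u) \<in> P"
proof -
  note lr = lt[OF r rnz] and lu = lt[OF u unz]
  have vr: "ptl (lt r) = v" using hr lr(1) by blast
  have vu: "fst (lt u) = v" using hu lu(1) by blast
  show "path_cat (lt r) (lt u) \<in> P" using cat_P lr(3) lu(3) vr vu by simp
  show "r (lt r) * sg (lt r) (u (lt u)) \<noteq> 0"
    using lr(1) lu(1) ring_aut_eq0[OF sg_aut[OF lr(3)]] by simp
  show "\<And>p. mulf r u p \<noteq> 0 \<Longrightarrow> key p \<le> key (path_cat (lt r) (lt u))"
  proof -
    fix p assume "mulf r u p \<noteq> 0"
    then obtain a s where as: "a \<in> P" "s \<in> P" "r a \<noteq> 0" "u s \<noteq> 0" "ptl a = fst s" "path_cat a s = p"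
      using mulf_support by blast
    have "key (path_cat a s) \<le> key (path_cat (lt r) (lt u))"
      using mono_cat_le[OF as(1) lr(3) as(2) lu(3), of v] hr hu as vr vu lr(2) lu(2) by blast
    then show "key p \<le> key (path_cat (lt r) (lt u))" using as by simp
  qed
  have "mulf r u (path_cat (lt r) (lt u)) = (\<Sum>a\<in>P. \<Sum>s\<in>P. if a = lt r \<and> s = lt u then r (lt r) * sg (lt r) (u (lt u)) else 0)"
    unfolding mulf_def
  proof (intro sum.cong refl)
    fix a s assume a: "a \<in> P" and s: "s \<in> P"
    show "(if ptl a = fst s \<and> path_cat a s = path_cat (lt r) (lt u) then r a * sg a (u s) else 0) =
          (if a = lt r \<and> s = lt u then r (lt r) * sg (lt r) (u (lt u)) else 0)"
    proof (cases "a = lt r \<and> s = lt u")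
      case True then show ?thesis using vr vu by simp
    next
      case False
      show ?thesis
      proof (cases "r a \<noteq> 0 \<and> u s \<noteq> 0 \<and> ptl a = fst s")
        case True
        have "key (path_cat a s) < key (path_cat (lt r) (lt u))"
          using mono_cat[OF a lr(3) s lu(3), of v] hr hu True vr vu lr(2) lu(2) False by auto
        then have "path_cat a s \<noteq> path_cat (lt r) (lt u)" by auto
        then show ?thesis using False by auto
      next
        case False
        then show ?thesis using \<open>\<not> (a = lt r \<and> s = lt u)\<close> ring_aut_0[OF sg_aut[OF a]] by auto
      qed
    qed
  qed
  also have "\<dots> = r (lt r) * sg (lt r) (u (lt u))"
  proof -
    have "(\<Sum>a\<in>P. \<Sum>s\<in>P. if a = lt r \<and> s = lt u then r (lt r) * sg (lt r) (u (lt u)) else 0)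
        = (\<Sum>a\<in>P. if a = lt r then (\<Sum>s\<in>P. if s = lt u then r (lt r) * sg (lt r) (u (lt u)) else 0) else 0)"
      by (intro sum.cong refl) auto
    also have "\<dots> = (\<Sum>a\<in>P. if a = lt r then r (lt r) * sg (lt r) (u (lt u)) else 0)"
      using lu(3) finite_P by (intro sum.cong refl) (simp add: sum.delta')
    also have "\<dots> = r (lt r) * sg (lt r) (u (lt u))"
      using lr(3) finite_P by (simp add: sum.delta')
    finally show ?thesis .
  qed
  finally show "mulf r u (path_cat (lt r) (lt u)) = r (lt r) * sg (lt r) (u (lt u))" .
qed

end


lemma lmodule_abelian: "lmodule R M \<Longrightarrow> abelian_group M"
  unfolding lmodule_def by blast

lemma lmodule_smult_closed: "lmodule R M \<Longrightarrow> a \<in> carrier R \<Longrightarrow> x \<in> carrier M \<Longrightarrow> a \<odot>\<^bsub>M\<^esub> x \<in> carrier M"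
  unfolding lmodule_def by blast

lemma lmodule_smult_add: "lmodule R M \<Longrightarrow> a \<in> carrier R \<Longrightarrow> x \<in> carrier M \<Longrightarrow> y \<in> carrier M \<Longrightarrow>
   a \<odot>\<^bsub>M\<^esub> (x \<oplus>\<^bsub>M\<^esub> y) = a \<odot>\<^bsub>M\<^esub> x \<oplus>\<^bsub>M\<^esub> a \<odot>\<^bsub>M\<^esub> y"
  unfolding lmodule_def by blast

lemma lmodule_add_smult: "lmodule R M \<Longrightarrow> a \<in> carrier R \<Longrightarrow> b \<in> carrier R \<Longrightarrow> x \<in> carrier M \<Longrightarrow>
   (a \<oplus>\<^bsub>R\<^esub> b) \<odot>\<^bsub>M\<^esub> x = a \<odot>\<^bsub>M\<^esub> x \<oplus>\<^bsub>M\<^esub> b \<odot>\<^bsub>M\<^esub> x"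
  unfolding lmodule_def by blast

lemma lmodule_mult_smult: "lmodule R M \<Longrightarrow> a \<in> carrier R \<Longrightarrow> b \<in> carrier R \<Longrightarrow> x \<in> carrier M \<Longrightarrow>
   (a \<otimes>\<^bsub>R\<^esub> b) \<odot>\<^bsub>M\<^esub> x = a \<odot>\<^bsub>M\<^esub> (b \<odot>\<^bsub>M\<^esub> x)"
  unfolding lmodule_def by blast

lemma lmodule_smult_zero:
  assumes M: "lmodule R M" and a: "a \<in> carrier R"
  shows "a \<odot>\<^bsub>M\<^esub> \<zero>\<^bsub>M\<^esub> = \<zero>\<^bsub>M\<^esub>"
proof -
  interpret M: abelian_group M using lmodule_abelian[OF M] .
  have c: "a \<odot>\<^bsub>M\<^esub> \<zero>\<^bsub>M\<^esub> \<in> carrier M" using lmodule_smult_closed[OF M a M.zero_closed] .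
  have "a \<odot>\<^bsub>M\<^esub> \<zero>\<^bsub>M\<^esub> \<oplus>\<^bsub>M\<^esub> a \<odot>\<^bsub>M\<^esub> \<zero>\<^bsub>M\<^esub> = a \<odot>\<^bsub>M\<^esub> (\<zero>\<^bsub>M\<^esub> \<oplus>\<^bsub>M\<^esub> \<zero>\<^bsub>M\<^esub>)"
    using lmodule_smult_add[OF M a M.zero_closed M.zero_closed] by simp
  also have "\<dots> = a \<odot>\<^bsub>M\<^esub> \<zero>\<^bsub>M\<^esub> \<oplus>\<^bsub>M\<^esub> \<zero>\<^bsub>M\<^esub>" using c by simp
  finally show ?thesis using c by (simp del: M.r_zero)
qed

lemma lmodule_smult_finsum:
  assumes M: "lmodule R M" and a: "a \<in> carrier R" and fin: "finite B" and F: "F \<in> B \<rightarrow> carrier M"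
  shows "a \<odot>\<^bsub>M\<^esub> (finsum M F B) = finsum M (\<lambda>i. a \<odot>\<^bsub>M\<^esub> F i) B"
  using fin F
proof (induction B rule: finite_induct)
  case empty
  interpret M: abelian_group M using lmodule_abelian[OF M] .
  show ?case using lmodule_smult_zero[OF M a] by simp
next
  case (insert i B)
  interpret M: abelian_group M using lmodule_abelian[OF M] .
  have Fi: "F i \<in> carrier M" and FB: "F \<in> B \<rightarrow> carrier M" using insert by auto
  have G: "(\<lambda>i. a \<odot>\<^bsub>M\<^esub> F i) \<in> B \<rightarrow> carrier M" using FB lmodule_smult_closed[OF M a] by auto
  have "a \<odot>\<^bsub>M\<^esub> finsum M F (insert i B) = a \<odot>\<^bsub>M\<^esub> (F i \<oplus>\<^bsub>M\<^esub> finsum M F B)"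
    using insert FB Fi by (simp add: M.finsum_insert)
  also have "\<dots> = a \<odot>\<^bsub>M\<^esub> F i \<oplus>\<^bsub>M\<^esub> a \<odot>\<^bsub>M\<^esub> finsum M F B"
    using lmodule_smult_add[OF M a Fi M.finsum_closed[OF FB]] .
  also have "\<dots> = finsum M (\<lambda>i. a \<odot>\<^bsub>M\<^esub> F i) (insert i B)"
    using insert G lmodule_smult_closed[OF M a Fi] by (simp add: M.finsum_insert)
  finally show ?case .
qed

lemma hom_finsum:
  assumes M: "abelian_group M" and N: "abelian_group N"
    and S: "\<zero>\<^bsub>M\<^esub> \<in> S" "\<And>x y. x \<in> S \<Longrightarrow> y \<in> S \<Longrightarrow> x \<oplus>\<^bsub>M\<^esub> y \<in> S" "S \<subseteq> carrier M"
    and f: "f \<in> S \<rightarrow> carrier N" "\<And>x y. x \<in> S \<Longrightarrow> y \<in> S \<Longrightarrow> f (x \<oplus>\<^bsub>M\<^esub> y) = f x \<oplus>\<^bsub>N\<^esub> f y"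
    and fin: "finite B" and F: "F \<in> B \<rightarrow> S"
  shows "finsum M F B \<in> S \<and> f (finsum M F B) = finsum N (\<lambda>i. f (F i)) B"
  using fin F
proof (induction B rule: finite_induct)
  case empty
  interpret M: abelian_group M by fact
  interpret N: abelian_group N by fact
  have z: "f \<zero>\<^bsub>M\<^esub> \<in> carrier N" using f S by auto
  have "f \<zero>\<^bsub>M\<^esub> \<oplus>\<^bsub>N\<^esub> f \<zero>\<^bsub>M\<^esub> = f \<zero>\<^bsub>M\<^esub> \<oplus>\<^bsub>N\<^esub> \<zero>\<^bsub>N\<^esub>"
    using f(2)[OF S(1) S(1)] z by simp
  then have "f \<zero>\<^bsub>M\<^esub> = \<zero>\<^bsub>N\<^esub>" using z by (simp del: N.r_zero)
  then show ?case using S by simp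
next
  case (insert i B)
  interpret M: abelian_group M by fact
  interpret N: abelian_group N by fact
  have Fi: "F i \<in> S" and FB: "F \<in> B \<rightarrow> S" using insert by auto
  have FBc: "F \<in> B \<rightarrow> carrier M" using FB S by auto
  have IH: "finsum M F B \<in> S" "f (finsum M F B) = finsum N (\<lambda>i. f (F i)) B" using insert.IH[OF FB] by auto
  have eq: "finsum M F (insert i B) = F i \<oplus>\<^bsub>M\<^esub> finsum M F B"
    using insert FBc Fi S by (subst M.finsum_insert) auto
  have G: "(\<lambda>i. f (F i)) \<in> B \<rightarrow> carrier N" using FB f by auto
  show ?case
  proof
    show "finsum M F (insert i B) \<in> S" using eq S(2)[OF Fi IH(1)] by simp
    have "f (finsum M F (insert i B)) = f (F i) \<oplus>\<^bsub>N\<^esub> f (finsum M F B)" using eq f(2)[OF Fi IH(1)] by simp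
    also have "\<dots> = finsum N (\<lambda>i. f (F i)) (insert i B)"
      using IH(2) insert G f Fi by (subst N.finsum_insert) auto
    finally show "f (finsum M F (insert i B)) = finsum N (\<lambda>i. f (F i)) (insert i B)" .
  qed
qed


lemma ideal_lmod_simps[simp]: "carrier (ideal_lmod R I) = I" "add (ideal_lmod R I) = add R"
  "zero (ideal_lmod R I) = zero R" "smult (ideal_lmod R I) = mult R"
  unfolding ideal_lmod_def by simp_all

lemma lmodule_ideal:
  fixes R (structure)
  assumes R: "ring R" and I: "left_ideal I R"
  shows "lmodule R (ideal_lmod R I)"
proof -
  interpret ring R by fact
  have sg: "additive_subgroup I R" and cl: "\<And>a x. a \<in> I \<Longrightarrow> x \<in> carrier R \<Longrightarrow> x \<otimes> a \<in> I"
    using I unfolding left_ideal_def by auto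
  have sub: "I \<subseteq> carrier R" using additive_subgroup.a_subset[OF sg] .
  have ag: "abelian_group (ideal_lmod R I)"
  proof (rule abelian_groupI)
    show "\<And>x y. x \<in> carrier (ideal_lmod R I) \<Longrightarrow> y \<in> carrier (ideal_lmod R I) \<Longrightarrow> x \<oplus>\<^bsub>ideal_lmod R I\<^esub> y \<in> carrier (ideal_lmod R I)"
      using additive_subgroup.a_closed[OF sg] by simp
    show "\<zero>\<^bsub>ideal_lmod R I\<^esub> \<in> carrier (ideal_lmod R I)" using additive_subgroup.zero_closed[OF sg] by simp
    show "\<And>x y z. x \<in> carrier (ideal_lmod R I) \<Longrightarrow> y \<in> carrier (ideal_lmod R I) \<Longrightarrow> z \<in> carrier (ideal_lmod R I) \<Longrightarrow>
      x \<oplus>\<^bsub>ideal_lmod R I\<^esub> y \<oplus>\<^bsub>ideal_lmod R I\<^esub> z = x \<oplus>\<^bsub>ideal_lmod R I\<^esub> (y \<oplus>\<^bsub>ideal_lmod R I\<^esub> z)"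
      using sub by (auto intro!: a_assoc)
    show "\<And>x y. x \<in> carrier (ideal_lmod R I) \<Longrightarrow> y \<in> carrier (ideal_lmod R I) \<Longrightarrow> x \<oplus>\<^bsub>ideal_lmod R I\<^esub> y = y \<oplus>\<^bsub>ideal_lmod R I\<^esub> x"
      using sub by (auto intro!: a_comm)
    show "\<And>x. x \<in> carrier (ideal_lmod R I) \<Longrightarrow> \<zero>\<^bsub>ideal_lmod R I\<^esub> \<oplus>\<^bsub>ideal_lmod R I\<^esub> x = x"
      using sub by auto
    show "\<And>x. x \<in> carrier (ideal_lmod R I) \<Longrightarrow> \<exists>y\<in>carrier (ideal_lmod R I). y \<oplus>\<^bsub>ideal_lmod R I\<^esub> x = \<zero>\<^bsub>ideal_lmod R I\<^esub>"
      using sub additive_subgroup.a_inv_closed[OF sg] by (auto intro!: bexI[of _ "\<ominus> _"] l_neg)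
  qed
  show ?thesis unfolding lmodule_def
    using R ag sub cl by (auto intro: l_distr r_distr m_assoc)
qed

lemma proj_from_decomp:
  fixes R :: "'a ring" (structure) and I :: "'a set" and B :: "'b set" and u :: "'b \<Rightarrow> 'a" and A :: "'b \<Rightarrow> 'a set"
  assumes R: "ring R" and I: "left_ideal I R" and fin: "finite B" and u: "\<forall>i\<in>B. u i \<in> I"
    and A: "\<forall>i\<in>B. A i \<subseteq> carrier R"
    and Aadd: "\<forall>i\<in>B. \<forall>a\<in>A i. \<forall>b\<in>A i. a \<oplus>\<^bsub>R\<^esub> b \<in> A i"
    and Amul: "\<forall>i\<in>B. \<forall>a\<in>A i. \<forall>c\<in>carrier R. c \<otimes>\<^bsub>R\<^esub> a \<in> A i"
    and ex: "\<forall>x\<in>I. \<exists>r. (\<forall>i\<in>B. r i \<in> A i) \<and> x = (\<Oplus>\<^bsub>R\<^esub>i\<in>B. r i \<otimes>\<^bsub>R\<^esub> u i)"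
    and uniq: "\<forall>r r'. (\<forall>i\<in>B. r i \<in> A i) \<longrightarrow> (\<forall>i\<in>B. r' i \<in> A i) \<longrightarrow>
        (\<Oplus>\<^bsub>R\<^esub>i\<in>B. r i \<otimes>\<^bsub>R\<^esub> u i) = (\<Oplus>\<^bsub>R\<^esub>i\<in>B. r' i \<otimes>\<^bsub>R\<^esub> u i) \<longrightarrow> (\<forall>i\<in>B. r i = r' i)"
  shows "projective_lmod R (ideal_lmod R I) TYPE('m) TYPE('n)"
proof -
  interpret ring R by fact
  have sg: "additive_subgroup I R" and cl: "\<And>a x. a \<in> I \<Longrightarrow> x \<in> carrier R \<Longrightarrow> x \<otimes> a \<in> I"
    using I unfolding left_ideal_def by auto
  have sub: "I \<subseteq> carrier R" using additive_subgroup.a_subset[OF sg] .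
  have uc: "\<And>i. i \<in> B \<Longrightarrow> u i \<in> carrier R" using u sub by auto
  define co where "co x = (SOME r. (\<forall>i\<in>B. r i \<in> A i) \<and> x = (\<Oplus>i\<in>B. r i \<otimes> u i))" for x
  have co: "(\<forall>i\<in>B. co x i \<in> A i) \<and> x = (\<Oplus>i\<in>B. co x i \<otimes> u i)" if "x \<in> I" for x
  proof -
    have "\<exists>r. (\<forall>i\<in>B. r i \<in> A i) \<and> x = (\<Oplus>i\<in>B. r i \<otimes> u i)" using ex that by blast
    then show ?thesis unfolding co_def by (rule someI_ex)
  qed
  have coA: "\<And>x i. x \<in> I \<Longrightarrow> i \<in> B \<Longrightarrow> co x i \<in> A i" using co by blast
  have coC: "\<And>x i. x \<in> I \<Longrightarrow> i \<in> B \<Longrightarrow> co x i \<in> carrier R" using coA A by blast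
  have coS: "\<And>x. x \<in> I \<Longrightarrow> x = (\<Oplus>i\<in>B. co x i \<otimes> u i)" using co by blast
  have co_add: "co (x \<oplus> y) i = co x i \<oplus> co y i" if "x \<in> I" "y \<in> I" "i \<in> B" for x y i
  proof -
    have xy: "x \<oplus> y \<in> I" using additive_subgroup.a_closed[OF sg that(1,2)] .
    have "(\<Oplus>i\<in>B. (co x i \<oplus> co y i) \<otimes> u i) = (\<Oplus>i\<in>B. co x i \<otimes> u i \<oplus> co y i \<otimes> u i)"
      using coC that uc by (intro finsum_cong') (auto simp: l_distr)
    also have "\<dots> = (\<Oplus>i\<in>B. co x i \<otimes> u i) \<oplus> (\<Oplus>i\<in>B. co y i \<otimes> u i)"
      using coC that uc by (intro finsum_addf) auto
    also have "\<dots> = x \<oplus> y" using coS that by simp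
    also have "\<dots> = (\<Oplus>i\<in>B. co (x \<oplus> y) i \<otimes> u i)" using coS[OF xy] .
    finally have "\<forall>i\<in>B. co x i \<oplus> co y i = co (x \<oplus> y) i"
      using uniq[rule_format, of "\<lambda>i. co x i \<oplus> co y i" "co (x \<oplus> y)"] coA that xy Aadd by blast
    then show ?thesis using that by simp
  qed
  have co_mul: "co (a \<otimes> x) i = a \<otimes> co x i" if "x \<in> I" "a \<in> carrier R" "i \<in> B" for x a i
  proof -
    have ax: "a \<otimes> x \<in> I" using cl that by blast
    have "(\<Oplus>i\<in>B. (a \<otimes> co x i) \<otimes> u i) = (\<Oplus>i\<in>B. a \<otimes> (co x i \<otimes> u i))"
      using coC that uc by (intro finsum_cong') (auto simp: m_assoc)
    also have "\<dots> = a \<otimes> (\<Oplus>i\<in>B. co x i \<otimes> u i)"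
      using coC that uc fin by (intro finsum_rdistr[symmetric]) auto
    also have "\<dots> = a \<otimes> x" using coS that by simp
    also have "\<dots> = (\<Oplus>i\<in>B. co (a \<otimes> x) i \<otimes> u i)" using coS[OF ax] .
    finally have "\<forall>i\<in>B. a \<otimes> co x i = co (a \<otimes> x) i"
      using uniq[rule_format, of "\<lambda>i. a \<otimes> co x i" "co (a \<otimes> x)"] coA that ax Amul by blast
    then show ?thesis using that by simp
  qed
  show ?thesis unfolding projective_lmod_def
  proof (intro conjI allI impI ballI)
    show "lmodule R (ideal_lmod R I)" by (rule lmodule_ideal[OF R I])
    fix M :: "('a, 'm) module" and N :: "('a, 'n) module"
    assume MN: "lmodule R M \<and> lmodule R N"
    then have M: "lmodule R M" and N: "lmodule R N" by auto
    interpret M: abelian_group M using lmodule_abelian[OF M] .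
    interpret N: abelian_group N using lmodule_abelian[OF N] .
    fix g assume g: "g \<in> lmod_hom R M N" and gs: "g ` carrier M = carrier N"
    fix f assume f: "f \<in> lmod_hom R (ideal_lmod R I) N"
    have fC: "\<And>x. x \<in> I \<Longrightarrow> f x \<in> carrier N" using f unfolding lmod_hom_def by auto
    have fadd: "\<And>x y. x \<in> I \<Longrightarrow> y \<in> I \<Longrightarrow> f (x \<oplus> y) = f x \<oplus>\<^bsub>N\<^esub> f y" using f unfolding lmod_hom_def by auto
    have fmul: "\<And>a x. a \<in> carrier R \<Longrightarrow> x \<in> I \<Longrightarrow> f (a \<otimes> x) = a \<odot>\<^bsub>N\<^esub> f x" using f unfolding lmod_hom_def by auto
    have gC: "\<And>x. x \<in> carrier M \<Longrightarrow> g x \<in> carrier N" using g unfolding lmod_hom_def by auto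
    have gadd: "\<And>x y. x \<in> carrier M \<Longrightarrow> y \<in> carrier M \<Longrightarrow> g (x \<oplus>\<^bsub>M\<^esub> y) = g x \<oplus>\<^bsub>N\<^esub> g y" using g unfolding lmod_hom_def by auto
    have gmul: "\<And>a x. a \<in> carrier R \<Longrightarrow> x \<in> carrier M \<Longrightarrow> g (a \<odot>\<^bsub>M\<^esub> x) = a \<odot>\<^bsub>N\<^esub> g x" using g unfolding lmod_hom_def by auto
    define m where "m i = (SOME y. y \<in> carrier M \<and> g y = f (u i))" for i
    have m: "m i \<in> carrier M \<and> g (m i) = f (u i)" if "i \<in> B" for i
    proof -
      have "f (u i) \<in> g ` carrier M" using gs fC u that by auto
      then have "\<exists>y. y \<in> carrier M \<and> g y = f (u i)" by auto
      then show ?thesis unfolding m_def by (rule someI_ex)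
    qed
    define h where "h x = (\<Oplus>\<^bsub>M\<^esub>i\<in>B. co x i \<odot>\<^bsub>M\<^esub> m i)" for x
    have hterm: "(\<lambda>i. co x i \<odot>\<^bsub>M\<^esub> m i) \<in> B \<rightarrow> carrier M" if "x \<in> I" for x
      using coC[OF that] m lmodule_smult_closed[OF M] by auto
    have hC: "h x \<in> carrier M" if "x \<in> I" for x
      unfolding h_def using M.finsum_closed[OF hterm[OF that]] .
    have "h \<in> lmod_hom R (ideal_lmod R I) M"
      unfolding lmod_hom_def
    proof (intro CollectI conjI ballI)
      show "h \<in> carrier (ideal_lmod R I) \<rightarrow> carrier M" using hC by auto
      fix x y assume x: "x \<in> carrier (ideal_lmod R I)" and y: "y \<in> carrier (ideal_lmod R I)"
      then have x: "x \<in> I" and y: "y \<in> I" by auto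
      have "h (x \<oplus> y) = (\<Oplus>\<^bsub>M\<^esub>i\<in>B. co x i \<odot>\<^bsub>M\<^esub> m i \<oplus>\<^bsub>M\<^esub> co y i \<odot>\<^bsub>M\<^esub> m i)"
        unfolding h_def using x y m coC
        by (intro M.finsum_cong') (auto simp: co_add lmodule_add_smult[OF M] lmodule_smult_closed[OF M])
      also have "\<dots> = h x \<oplus>\<^bsub>M\<^esub> h y"
        unfolding h_def using hterm x y by (intro M.finsum_addf) auto
      finally show "h (x \<oplus>\<^bsub>ideal_lmod R I\<^esub> y) = h x \<oplus>\<^bsub>M\<^esub> h y" by simp
    next
      fix a x assume a: "a \<in> carrier R" and x: "x \<in> carrier (ideal_lmod R I)"
      then have x: "x \<in> I" by simp
      have "h (a \<otimes> x) = (\<Oplus>\<^bsub>M\<^esub>i\<in>B. a \<odot>\<^bsub>M\<^esub> (co x i \<odot>\<^bsub>M\<^esub> m i))"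
        unfolding h_def using x a m coC
        by (intro M.finsum_cong') (auto simp: co_mul lmodule_mult_smult[OF M] lmodule_smult_closed[OF M])
      also have "\<dots> = a \<odot>\<^bsub>M\<^esub> h x"
        unfolding h_def using hterm[OF x] a fin by (intro lmodule_smult_finsum[OF M, symmetric])
      finally show "h (a \<odot>\<^bsub>ideal_lmod R I\<^esub> x) = a \<odot>\<^bsub>M\<^esub> h x" by simp
    qed
    moreover have "\<forall>x\<in>carrier (ideal_lmod R I). g (h x) = f x"
    proof
      fix x assume "x \<in> carrier (ideal_lmod R I)"
      then have x: "x \<in> I" by simp
      have termI: "(\<lambda>i. co x i \<otimes> u i) \<in> B \<rightarrow> I" using cl u coC[OF x] by auto
      have "g (h x) = (\<Oplus>\<^bsub>N\<^esub>i\<in>B. g (co x i \<odot>\<^bsub>M\<^esub> m i))"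
        unfolding h_def
        using hom_finsum[OF M.abelian_group_axioms N.abelian_group_axioms M.zero_closed _ order_refl, of g, OF _ _ _ fin hterm[OF x]]
          M.a_closed gC gadd by auto
      also have "\<dots> = (\<Oplus>\<^bsub>N\<^esub>i\<in>B. f (co x i \<otimes> u i))"
        using m coC[OF x] u gC fC lmodule_smult_closed[OF M] lmodule_smult_closed[OF N] cl
        by (intro N.finsum_cong') (auto simp: gmul fmul)
      also have "\<dots> = f (\<Oplus>i\<in>B. co x i \<otimes> u i)"
        using hom_finsum[OF abelian_group_axioms N.abelian_group_axioms additive_subgroup.zero_closed[OF sg]
            additive_subgroup.a_closed[OF sg] sub _ fadd fin termI] fC by auto
      also have "\<dots> = f x" using coS[OF x] by simp
      finally show "g (h x) = f x" .
    qed
    ultimately show "\<exists>h\<in>lmod_hom R (ideal_lmod R I) M. \<forall>x\<in>carrier (ideal_lmod R I). g (h x) = f x" by blast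
  qed
qed


context spa begin

lemma composable_junction:
  assumes "composable Q1 hd_q tl_q (xs @ ys)" "xs \<noteq> []" "ys \<noteq> []"
  shows "tl_q (last xs) = hd_q (hd ys)"
proof -
  have "Suc (length xs - 1) < length (xs @ ys)" using assms by auto
  then have "tl_q ((xs @ ys) ! (length xs - 1)) = hd_q ((xs @ ys) ! Suc (length xs - 1))"
    using assms(1) unfolding composable_def by blast
  moreover have "(xs @ ys) ! (length xs - 1) = last xs" using assms(2) by (simp add: nth_append last_conv_nth)
  moreover have "(xs @ ys) ! Suc (length xs - 1) = hd ys" using assms(2,3) by (simp add: nth_append hd_conv_nth)
  ultimately show ?thesis by simp
qed

definition LM :: "'v \<times> 'e list \<Rightarrow> 'v \<times> 'e list \<Rightarrow> bool" where
  "LM q q' \<longleftrightarrow> (\<exists>w\<in>P. ptl w = fst q \<and> path_cat w q = q')"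

definition RM :: "'v \<times> 'e list \<Rightarrow> 'v \<times> 'e list \<Rightarrow> bool" where
  "RM q q' \<longleftrightarrow> (\<exists>w\<in>P. ptl q = fst w \<and> path_cat q w = q')"

lemma LM_refl: "q \<in> P \<Longrightarrow> LM q q"
  unfolding LM_def using triv_P P_fst cat_triv_left[of q "fst q"] by (intro bexI[of _ "(fst q, [])"]) auto

lemma RM_refl: "q \<in> P \<Longrightarrow> RM q q"
  unfolding RM_def using triv_P ptl_Q0 cat_triv_right[of q "ptl q"] by (intro bexI[of _ "(ptl q, [])"]) auto

lemma LM_P: "q \<in> P \<Longrightarrow> LM q q' \<Longrightarrow> q' \<in> P"
  unfolding LM_def using cat_P by blast

lemma RM_P: "q \<in> P \<Longrightarrow> RM q q' \<Longrightarrow> q' \<in> P"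
  unfolding RM_def using cat_P by blast

lemma LM_trans: assumes "q \<in> P" "LM q q0" "LM q0 m" shows "LM q m"
proof -
  obtain w where w: "w \<in> P" "ptl w = fst q" "path_cat w q = q0" using assms(2) unfolding LM_def by blast
  obtain w' where w': "w' \<in> P" "ptl w' = fst q0" "path_cat w' q0 = m" using assms(3) unfolding LM_def by blast
  have "ptl w' = fst w" using w w' by auto
  then have "path_cat w' w \<in> P" using cat_P w w' by blast
  moreover have "ptl (path_cat w' w) = fst q" using ptl_cat[OF \<open>ptl w' = fst w\<close>] w by simp
  moreover have "path_cat (path_cat w' w) q = m" using w w' cat_assoc by metis
  ultimately show ?thesis unfolding LM_def by blast
qed

lemma RM_trans: assumes "q \<in> P" "RM q q0" "RM q0 m" shows "RM q m"
proof -
  obtain w where w: "w \<in> P" "ptl q = fst w" "path_cat q w = q0" using assms(2) unfolding RM_def by blast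
  obtain w' where w': "w' \<in> P" "ptl q0 = fst w'" "path_cat q0 w' = m" using assms(3) unfolding RM_def by blast
  have "ptl w = fst w'" using w w' ptl_cat by metis
  then have "path_cat w w' \<in> P" using cat_P w w' by blast
  moreover have "ptl q = fst (path_cat w w')" using w by simp
  moreover have "path_cat q (path_cat w w') = m" using w w' cat_assoc by metis
  ultimately show ?thesis unfolding RM_def by blast
qed

lemma LM_len: assumes "q \<in> P" "LM q q'" "q \<noteq> q'" shows "length (snd q) < length (snd q')"
proof -
  obtain w where w: "w \<in> P" "ptl w = fst q" "path_cat w q = q'" using assms(2) unfolding LM_def by blast
  have "snd w \<noteq> []"
  proof
    assume "snd w = []"
    then have "path_cat w q = q" using w(2) unfolding path_tail_def path_cat_def by (simp add: prod_eq_iff)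
    then show False using w assms by simp
  qed
  then show ?thesis using w by auto
qed

lemma RM_len: assumes "q \<in> P" "RM q q'" "q \<noteq> q'" shows "length (snd q) < length (snd q')"
proof -
  obtain w where w: "w \<in> P" "ptl q = fst w" "path_cat q w = q'" using assms(2) unfolding RM_def by blast
  have "snd w \<noteq> []"
  proof
    assume "snd w = []"
    then have "path_cat q w = q" unfolding path_cat_def by simp
    then show False using w assms by simp
  qed
  then show ?thesis using w by auto
qed

lemma LM_ext:
  assumes P: "w \<in> P" "w' \<in> P" "q \<in> P" "q' \<in> P"
    and t: "ptl w = fst q" "ptl w' = fst q'" and f: "fst w = fst w'"
    and us: "snd w = snd w' @ us" "us @ snd q = snd q'"
  shows "LM q q'"
proof (cases "us = []")
  case True
  then have "w = w'" using f us by (simp add: prod_eq_iff)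
  then have "fst q = fst q'" using t by simp
  then have "q = q'" using True us by (simp add: prod_eq_iff)
  then show ?thesis using LM_refl P by simp
next
  case False
  define t0 where "t0 = (fst q', us)"
  have sq': "snd q' \<noteq> []" using False us by auto
  have cq': "composable Q1 hd_q tl_q (us @ snd q)" using P_comp[OF P(4)] us by simp
  have t0P: "t0 \<in> P"
  proof (rule P_intro)
    show "fst t0 \<in> Q0" using P_fst[OF P(4)] unfolding t0_def by simp
    have "us = take (length us) (drop 0 (us @ snd q))" by simp
    then show "composable Q1 hd_q tl_q (snd t0)" unfolding t0_def using composable_sub[OF cq', of "length us" 0] by simp
    have "hd (snd q') = hd us" using us(2) False by (metis hd_append2)
    then show "fst t0 = hd_q (hd (snd t0))" if "snd t0 \<noteq> []"
      using P_hd[OF P(4) sq'] unfolding t0_def by simp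
  qed
  have tt: "ptl t0 = fst q"
  proof (cases "snd q = []")
    case True
    have "snd w \<noteq> []" using us False by simp
    then have "ptl w = tl_q (last us)" using us False unfolding path_tail_def by simp
    then show ?thesis using t False unfolding t0_def path_tail_def by simp
  next
    case False
    then show ?thesis using composable_junction[OF cq'] \<open>us \<noteq> []\<close> P_hd[OF P(3) False]
      unfolding t0_def path_tail_def by simp
  qed
  have "path_cat t0 q = q'" using us unfolding t0_def path_cat_def by (simp add: prod_eq_iff)
  then show ?thesis unfolding LM_def using t0P tt by blast
qed

lemma LM_comparable:
  assumes P: "w \<in> P" "w' \<in> P" "q \<in> P" "q' \<in> P"
    and t: "ptl w = fst q" "ptl w' = fst q'" and eq: "path_cat w q = path_cat w' q'"
  shows "LM q q' \<or> LM q' q"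
proof -
  have f: "fst w = fst w'" using eq by (metis fst_cat)
  have "snd w @ snd q = snd w' @ snd q'" using eq by (metis snd_cat)
  then obtain us where "snd w = snd w' @ us \<and> us @ snd q = snd q' \<or> snd w @ us = snd w' \<and> snd q = us @ snd q'"
    by (auto simp: append_eq_append_conv2)
  then show ?thesis
  proof
    assume "snd w = snd w' @ us \<and> us @ snd q = snd q'"
    then show ?thesis using LM_ext[OF P t f] by blast
  next
    assume "snd w @ us = snd w' \<and> snd q = us @ snd q'"
    then show ?thesis using LM_ext[OF P(2,1,4,3) t(2,1) f[symmetric]] by auto
  qed
qed

lemma RM_comparable:
  assumes P: "w \<in> P" "w' \<in> P" "q \<in> P" "q' \<in> P"
    and t: "ptl q = fst w" "ptl q' = fst w'" and eq: "path_cat q w = path_cat q' w'"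
  shows "RM q q' \<or> RM q' q"
proof -
  have f: "fst q = fst q'" using eq by (metis fst_cat)
  have "snd q @ snd w = snd q' @ snd w'" using eq by (metis snd_cat)
  then obtain us where us: "snd q = snd q' @ us \<and> us @ snd w = snd w' \<or> snd q @ us = snd q' \<and> snd w = us @ snd w'"
    by (auto simp: append_eq_append_conv2)
  have gen: "RM a a'" if P: "a \<in> P" "a' \<in> P" "b \<in> P" "b' \<in> P" and t: "ptl a = fst b" "ptl a' = fst b'"
      and f: "fst a = fst a'" and u: "snd a @ us = snd a'" "snd b = us @ snd b'" for a a' b b' us
  proof (cases "us = []")
    case True
    then have "a = a'" using f u by (simp add: prod_eq_iff)
    then show ?thesis using RM_refl P by simp
  next
    case False
    define t0 where "t0 = (ptl a, us)"
    have sb: "snd b \<noteq> []" using False u by auto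
    have cb: "composable Q1 hd_q tl_q (us @ snd b')" using P_comp[OF P(3)] u by simp
    have t0P: "t0 \<in> P"
    proof (rule P_intro)
      show "fst t0 \<in> Q0" using ptl_Q0[OF P(1)] unfolding t0_def by simp
      have "us = take (length us) (drop 0 (us @ snd b'))" by simp
      then show "composable Q1 hd_q tl_q (snd t0)" unfolding t0_def using composable_sub[OF cb, of "length us" 0] by simp
      have "hd (snd b) = hd us" using u(2) False by (metis hd_append2)
      then show "fst t0 = hd_q (hd (snd t0))" if "snd t0 \<noteq> []"
        using P_hd[OF P(3) sb] t unfolding t0_def by simp
    qed
    have "path_cat a t0 = a'" using u f unfolding t0_def path_cat_def by (simp add: prod_eq_iff)
    moreover have "ptl a = fst t0" unfolding t0_def by simp
    ultimately show ?thesis unfolding RM_def using t0P by blast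
  qed
  from us show ?thesis
  proof
    assume a: "snd q = snd q' @ us \<and> us @ snd w = snd w'"
    have "RM q' q" using gen[OF P(4,3,2,1) t(2,1) f[symmetric]] a by auto
    then show ?thesis by blast
  next
    assume a: "snd q @ us = snd q' \<and> snd w = us @ snd w'"
    have "RM q q'" using gen[OF P(3,4,1,2) t f] a by auto
    then show ?thesis by blast
  qed
qed

end


context spa begin

lemma mulf_zero_left: "mulf (\<lambda>p. 0) u = (\<lambda>p. 0)"
  unfolding mulf_def by (auto intro!: ext sum.neutral)

lemma mulf_diff_left: "mulf (\<lambda>p. a p - b p) u = (\<lambda>r. mulf a u r - mulf b u r)"
  unfolding mulf_def
  by (auto simp: sum_subtractf[symmetric] left_diff_distrib intro!: ext sum.cong)

lemma mulf_diff_right: "mulf u (\<lambda>p. a p - b p) = (\<lambda>r. mulf u a r - mulf u b r)"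
  unfolding mulf_def
  by (auto simp: sum_subtractf[symmetric] right_diff_distrib ring_aut_diff[OF sg_aut] intro!: ext sum.cong)

lemma mulf_add_left: "mulf (\<lambda>p. a p + b p) u = (\<lambda>r. mulf a u r + mulf b u r)"
  unfolding mulf_def by (auto simp: sum.distrib[symmetric] distrib_right intro!: ext sum.cong)

lemma mulf_add_right: "mulf u (\<lambda>p. a p + b p) = (\<lambda>r. mulf u a r + mulf u b r)"
  unfolding mulf_def
  by (auto simp: sum.distrib[symmetric] distrib_left ring_aut_add[OF sg_aut] intro!: ext sum.cong)

lemma sum_delta_cond: "finite S \<Longrightarrow> (\<Sum>s\<in>S. if s = r \<and> Q s then G s else (0::'k)) = (if r \<in> S \<and> Q r then G r else 0)"
proof -
  assume f: "finite S"
  have "(\<Sum>s\<in>S. if s = r \<and> Q s then G s else (0::'k)) = (\<Sum>s\<in>S. if s = r then (if Q r then G r else 0) else 0)"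
    by (intro sum.cong) auto
  also have "\<dots> = (if r \<in> S \<and> Q r then G r else 0)" using f by (simp add: sum.delta')
  finally show ?thesis .
qed

lemma mon_triv_left:
  assumes v: "v \<in> Q0" and x: "x \<in> C"
  shows "mulf (mon c (v, [])) x = (\<lambda>r. if fst r = v then c * x r else 0)"
proof
  fix r
  have "mulf (mon c (v, [])) x r = (\<Sum>p\<in>P. \<Sum>s\<in>P. if p = (v, []) then (if s = r \<and> fst s = v then c * x s else 0) else 0)"
    unfolding mulf_def
  proof (intro sum.cong refl)
    fix p s assume p: "p \<in> P" and s: "s \<in> P"
    show "(if ptl p = fst s \<and> path_cat p s = r then mon c (v, []) p * sg p (x s) else 0) =
          (if p = (v, []) then (if s = r \<and> fst s = v then c * x s else 0) else 0)"
    proof (cases "p = (v, [])")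
      case True
      have sgid: "sg p (x s) = x s" using True sg_triv[of p] by simp
      show ?thesis
      proof (cases "fst s = v")
        case True2: True
        have "path_cat p s = s" using True True2 cat_triv_left[of s v] by simp
        then show ?thesis using True True2 sgid unfolding mon_def by auto
      next
        case False
        then show ?thesis using True unfolding mon_def by simp
      qed
    next
      case False
      then show ?thesis unfolding mon_def by simp
    qed
  qed
  also have "\<dots> = (\<Sum>s\<in>P. if s = r \<and> fst s = v then c * x s else 0)"
    using v triv_P finite_P by (subst sum.swap) (simp add: sum.delta')
  also have "\<dots> = (if fst r = v then c * x r else 0)"
    using finite_P C_out[OF x] by (simp add: sum_delta_cond)
  finally show "mulf (mon c (v, [])) x r = (if fst r = v then c * x r else 0)" .
qed

lemma mon_triv_right:
  assumes v: "v \<in> Q0" and x: "x \<in> C"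
  shows "mulf x (mon c (v, [])) = (\<lambda>r. if ptl r = v then x r * sg r c else 0)"
proof
  fix r
  have "mulf x (mon c (v, [])) r = (\<Sum>p\<in>P. \<Sum>s\<in>P. if s = (v, []) then (if p = r \<and> ptl p = v then x p * sg p c else 0) else 0)"
    unfolding mulf_def
  proof (intro sum.cong refl)
    fix p s assume p: "p \<in> P" and s: "s \<in> P"
    show "(if ptl p = fst s \<and> path_cat p s = r then x p * sg p (mon c (v, []) s) else 0) =
          (if s = (v, []) then (if p = r \<and> ptl p = v then x p * sg p c else 0) else 0)"
    proof (cases "s = (v, [])")
      case True
      show ?thesis
      proof (cases "ptl p = v")
        case True2: True
        have "path_cat p s = p" using True cat_triv_right[of p v] by simp
        then show ?thesis using True True2 unfolding mon_def by auto
      next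
        case False
        then show ?thesis using True unfolding mon_def by simp
      qed
    next
      case False
      then show ?thesis unfolding mon_def using ring_aut_0[OF sg_aut[OF p]] by simp
    qed
  qed
  also have "\<dots> = (\<Sum>p\<in>P. if p = r \<and> ptl p = v then x p * sg p c else 0)"
    using v triv_P finite_P by (simp add: sum.delta')
  also have "\<dots> = (if ptl r = v then x r * sg r c else 0)"
    using finite_P C_out[OF x] by (simp add: sum_delta_cond)
  finally show "mulf x (mon c (v, [])) r = (if ptl r = v then x r * sg r c else 0)" .
qed

lemma finsum_eval:
  assumes fin: "finite B" and F: "F \<in> B \<rightarrow> C"
  shows "finsum R F B = (\<lambda>p. \<Sum>i\<in>B. F i p)"
  using fin F
proof (induction B rule: finite_induct)
  case empty
  interpret ring R by (rule ring_R)
  show ?case by simp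
next
  case (insert i B)
  interpret ring R by (rule ring_R)
  have "finsum R F (insert i B) = F i \<oplus>\<^bsub>R\<^esub> finsum R F B"
    using insert by (intro finsum_insert) auto
  then show ?case using insert by auto
qed

lemma a_inv_R: assumes x: "x \<in> C" shows "a_inv R x = (\<lambda>p. - x p)"
proof -
  interpret ring R by (rule ring_R)
  show ?thesis using x neg_C[OF x] by (intro minus_equality) auto
qed

lemma left_ideal_props:
  assumes I: "left_ideal I R"
  shows "I \<subseteq> C" "(\<lambda>p. 0) \<in> I" "\<And>x y. x \<in> I \<Longrightarrow> y \<in> I \<Longrightarrow> (\<lambda>p. x p - y p) \<in> I"
    "\<And>x y. x \<in> I \<Longrightarrow> y \<in> I \<Longrightarrow> (\<lambda>p. x p + y p) \<in> I"
    "\<And>a x. a \<in> C \<Longrightarrow> x \<in> I \<Longrightarrow> mulf a x \<in> I"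
proof -
  have sg: "additive_subgroup I R" and cl: "\<And>a x. a \<in> I \<Longrightarrow> x \<in> C \<Longrightarrow> x \<otimes>\<^bsub>R\<^esub> a \<in> I"
    using I unfolding left_ideal_def by auto
  show sub: "I \<subseteq> C" using additive_subgroup.a_subset[OF sg] by simp
  show "(\<lambda>p. 0) \<in> I" using additive_subgroup.zero_closed[OF sg] by simp
  show add: "\<And>x y. x \<in> I \<Longrightarrow> y \<in> I \<Longrightarrow> (\<lambda>p. x p + y p) \<in> I"
    using additive_subgroup.a_closed[OF sg] by fastforce
  show "\<And>x y. x \<in> I \<Longrightarrow> y \<in> I \<Longrightarrow> (\<lambda>p. x p - y p) \<in> I"
  proof -
    fix x y assume "x \<in> I" "y \<in> I"
    have "y \<in> C" using \<open>y \<in> I\<close> sub by blast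
    then have "(\<lambda>p. - y p) \<in> I" using additive_subgroup.a_inv_closed[OF sg \<open>y \<in> I\<close>] a_inv_R by simp
    then have "(\<lambda>p. x p + - y p) \<in> I" using add \<open>x \<in> I\<close> by blast
    then show "(\<lambda>p. x p - y p) \<in> I" by simp
  qed
  show "\<And>a x. a \<in> C \<Longrightarrow> x \<in> I \<Longrightarrow> mulf a x \<in> I"
    using cl sub mult_eq by fastforce
qed

lemma opp_simps[simp]: "carrier (opposite_ring R) = C" "zero (opposite_ring R) = (\<lambda>p. 0)"
  "add (opposite_ring R) = (\<lambda>x y p. x p + y p)" "one (opposite_ring R) = oneR"
  "mult (opposite_ring R) = (\<lambda>x y. path_alg_mult tl_q \<sigma> y x)"
  unfolding opposite_ring_def by simp_all

lemma add_monoid_opp: "add_monoid (opposite_ring R) = add_monoid R"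
  unfolding opposite_ring_def by simp

lemma right_ideal_props:
  assumes I: "left_ideal I (opposite_ring R)"
  shows "I \<subseteq> C" "(\<lambda>p. 0) \<in> I" "\<And>x y. x \<in> I \<Longrightarrow> y \<in> I \<Longrightarrow> (\<lambda>p. x p - y p) \<in> I"
    "\<And>x y. x \<in> I \<Longrightarrow> y \<in> I \<Longrightarrow> (\<lambda>p. x p + y p) \<in> I"
    "\<And>a x. a \<in> C \<Longrightarrow> x \<in> I \<Longrightarrow> mulf x a \<in> I"
proof -
  have sg0: "additive_subgroup I (opposite_ring R)" and cl: "\<And>a x. a \<in> I \<Longrightarrow> x \<in> C \<Longrightarrow> x \<otimes>\<^bsub>opposite_ring R\<^esub> a \<in> I"
    using I unfolding left_ideal_def by auto
  have sg: "additive_subgroup I R" using sg0 unfolding additive_subgroup_def add_monoid_opp .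
  show sub: "I \<subseteq> C" using additive_subgroup.a_subset[OF sg] by simp
  show "(\<lambda>p. 0) \<in> I" using additive_subgroup.zero_closed[OF sg] by simp
  show add: "\<And>x y. x \<in> I \<Longrightarrow> y \<in> I \<Longrightarrow> (\<lambda>p. x p + y p) \<in> I"
    using additive_subgroup.a_closed[OF sg] by fastforce
  show "\<And>x y. x \<in> I \<Longrightarrow> y \<in> I \<Longrightarrow> (\<lambda>p. x p - y p) \<in> I"
  proof -
    fix x y assume "x \<in> I" "y \<in> I"
    have "y \<in> C" using \<open>y \<in> I\<close> sub by blast
    then have "(\<lambda>p. - y p) \<in> I" using additive_subgroup.a_inv_closed[OF sg \<open>y \<in> I\<close>] a_inv_R by simp
    then have "(\<lambda>p. x p + - y p) \<in> I" using add \<open>x \<in> I\<close> by blast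
    then show "(\<lambda>p. x p - y p) \<in> I" by simp
  qed
  show "\<And>a x. a \<in> C \<Longrightarrow> x \<in> I \<Longrightarrow> mulf x a \<in> I"
    using cl sub mult_eq by fastforce
qed

end


locale spa_lideal = spa Q0 Q1 hd_q tl_q \<sigma>
  for Q0 :: "'v set" and Q1 :: "'e set" and hd_q tl_q :: "'e \<Rightarrow> 'v" and \<sigma> :: "'e \<Rightarrow> 'k::division_ring \<Rightarrow> 'k" +
  fixes I :: "('v \<times> 'e list \<Rightarrow> 'k) set"
  assumes I: "left_ideal I R"
begin

lemmas Ip = left_ideal_props[OF I]

definition Ls where "Ls = {lt x | x. x \<in> I \<and> x \<noteq> (\<lambda>p. 0)}"
definition Bs where "Bs = {q \<in> Ls. \<forall>q0\<in>Ls. LM q0 q \<longrightarrow> q0 = q}"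
definition U where "U q = (SOME u. u \<in> I \<and> u \<noteq> (\<lambda>p. 0) \<and> lt u = q \<and> (\<forall>s. u s \<noteq> 0 \<longrightarrow> fst s = fst q))"
definition A :: "'v \<times> 'e list \<Rightarrow> ('v \<times> 'e list \<Rightarrow> 'k) set" where
  "A q = {r \<in> C. \<forall>p. r p \<noteq> 0 \<longrightarrow> ptl p = fst q}"

lemma Ls_P: "Ls \<subseteq> P"
  unfolding Ls_def using lt(3) Ip(1) by blast

lemma Bs_Ls: "Bs \<subseteq> Ls" unfolding Bs_def by blast

lemma Bs_fin: "finite Bs"
proof (rule finite_subset[OF _ finite_P])
  show "Bs \<subseteq> P" using Bs_Ls Ls_P by (rule subset_trans)
qed

lemma B_exists: "m \<in> Ls \<Longrightarrow> \<exists>q\<in>Bs. LM q m"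
proof (induction "length (snd m)" arbitrary: m rule: less_induct)
  case less
  show ?case
  proof (cases "m \<in> Bs")
    case True then show ?thesis using LM_refl Ls_P less.prems by blast
  next
    case False
    then obtain q0 where q0: "q0 \<in> Ls" "LM q0 m" "q0 \<noteq> m" using less.prems unfolding Bs_def by blast
    then have "length (snd q0) < length (snd m)" using LM_len Ls_P by blast
    then obtain q where q: "q \<in> Bs" "LM q q0" using less.hyps q0(1) by blast
    then have "LM q m" using LM_trans q0 Bs_Ls Ls_P by blast
    then show ?thesis using q by blast
  qed
qed

lemma B_min: "q \<in> Bs \<Longrightarrow> q' \<in> Bs \<Longrightarrow> LM q q' \<Longrightarrow> q = q'"
  unfolding Bs_def by blast

lemma U_ex: assumes "q \<in> Ls" shows "\<exists>u. u \<in> I \<and> u \<noteq> (\<lambda>p. 0) \<and> lt u = q \<and> (\<forall>s. u s \<noteq> 0 \<longrightarrow> fst s = fst q)"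
proof -
  obtain x where x: "x \<in> I" "x \<noteq> (\<lambda>p. 0)" "lt x = q" using assms unfolding Ls_def by blast
  have xC: "x \<in> C" using x Ip(1) by blast
  have qP: "q \<in> P" using assms Ls_P by blast
  have v: "fst q \<in> Q0" using P_fst[OF qP] .
  define u where "u = mulf (mon 1 (fst q, [])) x"
  have u_eq: "u = (\<lambda>r. if fst r = fst q then x r else 0)"
    unfolding u_def mon_triv_left[OF v xC] by (rule ext) (metis mult_1_left)
  have uI: "u \<in> I" unfolding u_def using Ip(5) mon_C triv_P v x(1) by blast
  have uq: "u q \<noteq> 0" using u_eq lt(1)[OF xC x(2)] x(3) by simp
  have uC: "u \<in> C" using uI Ip(1) by blast
  have "lt u = q"
    using lt_unique[OF uC uq] lt(2)[OF xC x(2)] x(3) u_eq by (metis (mono_tags, lifting))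
  moreover have "\<forall>s. u s \<noteq> 0 \<longrightarrow> fst s = fst q" using u_eq by auto
  moreover have "u \<noteq> (\<lambda>p. 0)" using uq by auto
  ultimately show ?thesis using uI by blast
qed

lemma U: assumes "q \<in> Ls"
  shows "U q \<in> I" "U q \<noteq> (\<lambda>p. 0)" "lt (U q) = q" "\<And>s. U q s \<noteq> 0 \<Longrightarrow> fst s = fst q" "U q \<in> C"
proof -
  have "U q \<in> I \<and> U q \<noteq> (\<lambda>p. 0) \<and> lt (U q) = q \<and> (\<forall>s. U q s \<noteq> 0 \<longrightarrow> fst s = fst q)"
    unfolding U_def using U_ex[OF assms] by (rule someI_ex)
  then show "U q \<in> I" "U q \<noteq> (\<lambda>p. 0)" "lt (U q) = q" "\<And>s. U q s \<noteq> 0 \<Longrightarrow> fst s = fst q" by auto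
  then show "U q \<in> C" using Ip(1) by blast
qed

lemma A_C: "r \<in> A q \<Longrightarrow> r \<in> C" unfolding A_def by blast

lemma zero_A: "(\<lambda>p. 0) \<in> A q" unfolding A_def using zero_C by auto

lemma add_A: "r \<in> A q \<Longrightarrow> r' \<in> A q \<Longrightarrow> (\<lambda>p. r p + r' p) \<in> A q"
  unfolding A_def using add_C by (auto, metis add.right_neutral)

lemma diff_A: "r \<in> A q \<Longrightarrow> r' \<in> A q \<Longrightarrow> (\<lambda>p. r p - r' p) \<in> A q"
proof -
  assume a: "r \<in> A q" "r' \<in> A q"
  have "(\<lambda>p. - r' p) \<in> A q" using a(2) neg_C unfolding A_def by auto
  then have "(\<lambda>p. r p + - r' p) \<in> A q" using add_A a(1) by blast
  then show ?thesis by simp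
qed

lemma mul_A: "r \<in> A q \<Longrightarrow> c \<in> C \<Longrightarrow> mulf c r \<in> A q"
proof -
  assume r: "r \<in> A q" and c: "c \<in> C"
  have "mulf c r \<in> C" using mulf_C c A_C[OF r] by blast
  moreover have "ptl p = fst q" if nz: "mulf c r p \<noteq> 0" for p
  proof -
    obtain a s where as: "a \<in> P" "s \<in> P" "c a \<noteq> 0" "r s \<noteq> 0" "ptl a = fst s" "path_cat a s = p"
      using mulf_support[OF nz] by blast
    have "ptl s = fst q" using r as unfolding A_def by blast
    then show ?thesis using ptl_cat[OF as(5)] as by simp
  qed
  ultimately show ?thesis unfolding A_def by blast
qed

end


context spa_lideal begin

abbreviation Sm where "Sm r \<equiv> (\<lambda>p. \<Sum>q\<in>Bs. mulf (r q) (U q) p)"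

lemma zero_rep: "\<exists>r. (\<forall>q\<in>Bs. r q \<in> A q) \<and> (\<lambda>p. 0) = Sm r"
  by (rule exI[of _ "\<lambda>q p. 0"]) (simp add: zero_A mulf_zero_left)

lemma mon_A: "w \<in> P \<Longrightarrow> ptl w = fst q \<Longrightarrow> mon d w \<in> A q"
  unfolding A_def using mon_C by (auto simp: mon_def)

lemma span: "x \<in> I \<Longrightarrow> \<exists>r. (\<forall>q\<in>Bs. r q \<in> A q) \<and> x = Sm r"
proof (induction "card {p\<in>P. key p \<le> key (lt x)}" arbitrary: x rule: less_induct)
  case less
  show ?case
  proof (cases "x = (\<lambda>p. 0)")
    case True then show ?thesis using zero_rep by simp
  next
    case False
    have xC: "x \<in> C" using less.prems Ip(1) by blast
    define m where "m = lt x"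
    have mP: "m \<in> P" and xm: "x m \<noteq> 0" and mmax: "\<And>p. x p \<noteq> 0 \<Longrightarrow> key p \<le> key m"
      using lt[OF xC False] unfolding m_def by auto
    have mL: "m \<in> Ls" unfolding Ls_def m_def using less.prems False by blast
    obtain q where q: "q \<in> Bs" "LM q m" using B_exists[OF mL] by blast
    obtain w where w: "w \<in> P" "ptl w = fst q" "path_cat w q = m" using q(2) unfolding LM_def by blast
    have qL: "q \<in> Ls" using q Bs_Ls by blast
    note Uq = U[OF qL]
    define e where "e = sg w (U q q)"
    have "U q q \<noteq> 0" using lt(1)[OF Uq(5) Uq(2)] Uq(3) by simp
    then have e0: "e \<noteq> 0" unfolding e_def using ring_aut_eq0[OF sg_aut[OF w(1)]] by simp
    define d where "d = x m * inverse e"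
    have d0: "d \<noteq> 0" unfolding d_def using e0 xm by simp
    define t where "t = mulf (mon d w) (U q)"
    have monC: "mon d w \<in> C" using mon_C[OF w(1)] .
    have mnz: "mon d w \<noteq> (\<lambda>p. 0)" using mon_nz[OF d0] .
    have ltm: "lt (mon d w) = w" using lt_mon[OF w(1) d0] .
    have hr: "\<forall>p. mon d w p \<noteq> 0 \<longrightarrow> ptl p = fst q" using w(2) by (auto simp: mon_def)
    have hu: "\<forall>s. U q s \<noteq> 0 \<longrightarrow> fst s = fst q" using Uq(4) by blast
    note LMt = lead_mult[OF monC Uq(5) mnz Uq(2) hr hu]
    have tm: "t m = x m"
      using LMt(1) unfolding t_def ltm Uq(3) w(3) using e0 unfolding d_def e_def by (simp add: mon_def mult.assoc)
    have tle: "\<And>p. t p \<noteq> 0 \<Longrightarrow> key p \<le> key m"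
      using LMt(2) unfolding t_def ltm Uq(3) w(3) by blast
    have tI: "t \<in> I" unfolding t_def using Ip(5)[OF monC Uq(1)] .
    define y where "y = (\<lambda>p. x p - t p)"
    have yI: "y \<in> I" unfolding y_def using Ip(3)[OF less.prems tI] .
    have yC: "y \<in> C" using yI Ip(1) by blast
    have ym: "y m = 0" unfolding y_def using tm by simp
    have ysupp: "\<And>p. y p \<noteq> 0 \<Longrightarrow> key p \<le> key m \<and> p \<noteq> m"
    proof -
      fix p assume "y p \<noteq> 0"
      then have "x p \<noteq> 0 \<or> t p \<noteq> 0" unfolding y_def by auto
      then have "key p \<le> key m" using mmax tle by blast
      moreover have "p \<noteq> m" using \<open>y p \<noteq> 0\<close> ym by auto
      ultimately show "key p \<le> key m \<and> p \<noteq> m" by blast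
    qed
    obtain r' where r': "\<forall>q\<in>Bs. r' q \<in> A q" "y = Sm r'"
    proof (cases "y = (\<lambda>p. 0)")
      case True
      obtain r0 where "\<forall>q\<in>Bs. r0 q \<in> A q" "(\<lambda>p. 0) = Sm r0" using zero_rep by blast
      then show ?thesis using that[of r0] True by simp
    next
      case False
      note ly = lt[OF yC False]
      have "key (lt y) \<le> key m" "lt y \<noteq> m" using ysupp[OF ly(1)] by auto
      moreover have "key (lt y) \<noteq> key m" using key_inj[OF ly(3) mP] \<open>lt y \<noteq> m\<close> by blast
      ultimately have lty: "key (lt y) < key m" by simp
      have sub1: "{p\<in>P. key p \<le> key (lt y)} \<subseteq> {p\<in>P. key p \<le> key (lt x)}"
        using lty unfolding m_def by auto
      have "m \<in> {p\<in>P. key p \<le> key (lt x)}" "m \<notin> {p\<in>P. key p \<le> key (lt y)}"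
        using lty mP unfolding m_def by auto
      then have "{p\<in>P. key p \<le> key (lt y)} \<subset> {p\<in>P. key p \<le> key (lt x)}"
        using sub1 by blast
      then have "card {p\<in>P. key p \<le> key (lt y)} < card {p\<in>P. key p \<le> key (lt x)}"
        using finite_P by (intro psubset_card_mono) auto
      then obtain r0 where "\<forall>q\<in>Bs. r0 q \<in> A q" "y = Sm r0" using less.hyps[OF _ yI] by blast
      then show ?thesis using that by blast
    qed
    define r where "r = r'(q := (\<lambda>p. r' q p + mon d w p))"
    have "(\<lambda>p. r' q p + mon d w p) \<in> A q" using add_A[OF _ mon_A[OF w(1,2)]] r'(1) q(1) by blast
    then have rA: "\<forall>q'\<in>Bs. r q' \<in> A q'"
      unfolding r_def using r'(1) by auto
    have "x = Sm r"
    proof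
      fix p
      have "Sm r p = (\<Sum>i\<in>Bs. mulf (r' i) (U i) p + (if i = q then t p else 0))"
      proof (intro sum.cong refl)
        fix i assume "i \<in> Bs"
        show "mulf (r i) (U i) p = mulf (r' i) (U i) p + (if i = q then t p else 0)"
          unfolding r_def t_def by (cases "i = q") (simp_all add: mulf_add_left)
      qed
      also have "\<dots> = Sm r' p + t p" using q(1) Bs_fin by (simp add: sum.distrib)
      also have "\<dots> = x p" using r'(2) unfolding y_def by (metis diff_add_cancel)
      finally show "x p = Sm r p" by simp
    qed
    then show ?thesis using rA by blast
  qed
qed

lemma uniq:
  assumes r: "\<forall>q\<in>Bs. r q \<in> A q" and r': "\<forall>q\<in>Bs. r' q \<in> A q" and eq: "Sm r = Sm r'"
  shows "\<forall>q\<in>Bs. r q = r' q"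
proof -
  define \<delta> where "\<delta> q = (\<lambda>p. r q p - r' q p)" for q
  have \<delta>A: "\<And>q. q \<in> Bs \<Longrightarrow> \<delta> q \<in> A q" unfolding \<delta>_def using r r' diff_A by blast
  have S0: "(\<Sum>q\<in>Bs. mulf (\<delta> q) (U q) p) = 0" for p
  proof -
    have "(\<Sum>q\<in>Bs. mulf (\<delta> q) (U q) p) = Sm r p - Sm r' p"
      unfolding \<delta>_def mulf_diff_left by (simp add: sum_subtractf)
    moreover have "Sm r p = Sm r' p" using fun_cong[OF eq, of p] by simp
    ultimately show ?thesis by simp
  qed
  have all0: "\<forall>q\<in>Bs. \<delta> q = (\<lambda>p. 0)"
  proof (rule ccontr)
    assume neg: "\<not> (\<forall>q\<in>Bs. \<delta> q = (\<lambda>p. 0))"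
    define Q' where "Q' = {q\<in>Bs. \<delta> q \<noteq> (\<lambda>p. 0)}"
    have Q'ne: "Q' \<noteq> {}" using neg unfolding Q'_def by blast
    have Q'fin: "finite Q'" using Bs_fin unfolding Q'_def by simp
    define M where "M q = path_cat (lt (\<delta> q)) q" for q
    have "Max (key ` M ` Q') \<in> key ` M ` Q'" using Q'ne Q'fin by simp
    then obtain i where i: "i \<in> Q'" "key (M i) = Max (key ` M ` Q')" by auto
    have imax: "\<And>j. j \<in> Q' \<Longrightarrow> key (M j) \<le> key (M i)" using i Q'fin by simp
    have lead: "mulf (\<delta> j) (U j) (M j) \<noteq> 0" "\<And>p. mulf (\<delta> j) (U j) p \<noteq> 0 \<Longrightarrow> key p \<le> key (M j)" "M j \<in> P"
      "ptl (lt (\<delta> j)) = fst j" "lt (\<delta> j) \<in> P"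
      if j: "j \<in> Q'" for j
    proof -
      have jB: "j \<in> Bs" and jnz: "\<delta> j \<noteq> (\<lambda>p. 0)" using j unfolding Q'_def by auto
      have jL: "j \<in> Ls" using jB Bs_Ls by blast
      have dC: "\<delta> j \<in> C" using A_C[OF \<delta>A[OF jB]] .
      have hr: "\<forall>p. \<delta> j p \<noteq> 0 \<longrightarrow> ptl p = fst j" using \<delta>A[OF jB] unfolding A_def by blast
      have hu: "\<forall>s. U j s \<noteq> 0 \<longrightarrow> fst s = fst j" using U(4)[OF jL] by blast
      note L = lead_mult[OF dC U(5)[OF jL] jnz U(2)[OF jL] hr hu]
      show "mulf (\<delta> j) (U j) (M j) \<noteq> 0" using L(1,3) unfolding M_def U(3)[OF jL] by simp
      show "\<And>p. mulf (\<delta> j) (U j) p \<noteq> 0 \<Longrightarrow> key p \<le> key (M j)" using L(2) unfolding M_def U(3)[OF jL] by blast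
      show "M j \<in> P" using L(4) unfolding M_def U(3)[OF jL] .
      show "ptl (lt (\<delta> j)) = fst j" using hr lt(1)[OF dC jnz] by blast
      show "lt (\<delta> j) \<in> P" using lt(3)[OF dC jnz] .
    qed
    have iB: "i \<in> Bs" using i unfolding Q'_def by simp
    have others: "mulf (\<delta> j) (U j) (M i) = 0" if j: "j \<in> Bs - {i}" for j
    proof (cases "\<delta> j = (\<lambda>p. 0)")
      case True then show ?thesis by (simp add: mulf_zero_left)
    next
      case False
      then have jQ: "j \<in> Q'" using j unfolding Q'_def by simp
      show ?thesis
      proof (rule ccontr)
        assume "mulf (\<delta> j) (U j) (M i) \<noteq> 0"
        then have "key (M i) \<le> key (M j)" using lead(2)[OF jQ] by blast
        then have "key (M i) = key (M j)" using imax[OF jQ] by simp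
        then have "M i = M j" using key_inj lead(3)[OF jQ] lead(3)[OF i(1)] by blast
        then have "LM i j \<or> LM j i"
          using LM_comparable[OF lead(5)[OF i(1)] lead(5)[OF jQ] _ _ lead(4)[OF i(1)] lead(4)[OF jQ]]
            iB j Bs_Ls Ls_P unfolding M_def by blast
        then have "i = j" using B_min iB j by blast
        then show False using j by simp
      qed
    qed
    have "(\<Sum>q\<in>Bs. mulf (\<delta> q) (U q) (M i)) = mulf (\<delta> i) (U i) (M i) + (\<Sum>q\<in>Bs - {i}. mulf (\<delta> q) (U q) (M i))"
      by (rule sum.remove[OF Bs_fin iB])
    also have "\<dots> = mulf (\<delta> i) (U i) (M i)" using others by simp
    finally show False using S0 lead(1)[OF i(1)] by simp
  qed
  show ?thesis
  proof
    fix q assume "q \<in> Bs"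
    then have "\<delta> q = (\<lambda>p. 0)" using all0 by blast
    then have "\<And>p. r q p - r' q p = 0" unfolding \<delta>_def by meson
    then show "r q = r' q" by (intro ext) simp
  qed
qed

lemma finsum_form: "\<forall>i\<in>Bs. r i \<in> A i \<Longrightarrow> finsum R (\<lambda>i. r i \<otimes>\<^bsub>R\<^esub> U i) Bs = Sm r"
proof -
  assume rA: "\<forall>i\<in>Bs. r i \<in> A i"
  have UC: "\<And>i. i \<in> Bs \<Longrightarrow> U i \<in> C" using U(5) Bs_Ls by blast
  have "(\<lambda>i. r i \<otimes>\<^bsub>R\<^esub> U i) \<in> Bs \<rightarrow> C"
  proof
    fix i assume i: "i \<in> Bs"
    have "r i \<in> C" using rA i A_C by blast
    then show "r i \<otimes>\<^bsub>R\<^esub> U i \<in> C" using UC[OF i] mult_eq mulf_C by simp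
  qed
  then have "finsum R (\<lambda>i. r i \<otimes>\<^bsub>R\<^esub> U i) Bs = (\<lambda>p. \<Sum>i\<in>Bs. (r i \<otimes>\<^bsub>R\<^esub> U i) p)"
    using finsum_eval Bs_fin by blast
  also have "\<dots> = Sm r"
  proof (intro ext sum.cong refl)
    fix p i assume i: "i \<in> Bs"
    have "r i \<in> C" using rA i A_C by blast
    then show "(r i \<otimes>\<^bsub>R\<^esub> U i) p = mulf (r i) (U i) p" using UC[OF i] mult_eq by simp
  qed
  finally show ?thesis .
qed

lemma mul_A': "r \<in> A q \<Longrightarrow> c \<in> C \<Longrightarrow> path_alg_mult tl_q \<sigma> c r \<in> A q"
  using mul_A mult_eq A_C by metis

lemma left_proj: "projective_lmod R (ideal_lmod R I) TYPE('m) TYPE('n)"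
proof (rule proj_from_decomp[OF ring_R I Bs_fin, of U A])
  show "\<forall>i\<in>Bs. U i \<in> I" using U(1) Bs_Ls by blast
  show "\<forall>i\<in>Bs. A i \<subseteq> carrier R" using A_C by auto
  show "\<forall>i\<in>Bs. \<forall>a\<in>A i. \<forall>b\<in>A i. a \<oplus>\<^bsub>R\<^esub> b \<in> A i" by (auto intro!: add_A)
  show "\<forall>i\<in>Bs. \<forall>a\<in>A i. \<forall>c\<in>carrier R. c \<otimes>\<^bsub>R\<^esub> a \<in> A i"
  proof (intro ballI)
    fix i a c
    assume h: "i \<in> Bs" "a \<in> A i" "c \<in> carrier R"
    show "c \<otimes>\<^bsub>R\<^esub> a \<in> A i" using mul_A'[OF h(2)] h(3) by simp
  qed
  show "\<forall>x\<in>I. \<exists>r. (\<forall>i\<in>Bs. r i \<in> A i) \<and> x = finsum R (\<lambda>i. r i \<otimes>\<^bsub>R\<^esub> U i) Bs"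
  proof
    fix x assume "x \<in> I"
    then obtain r where r: "\<forall>i\<in>Bs. r i \<in> A i" "x = Sm r" using span by blast
    then show "\<exists>r. (\<forall>i\<in>Bs. r i \<in> A i) \<and> x = finsum R (\<lambda>i. r i \<otimes>\<^bsub>R\<^esub> U i) Bs"
      using finsum_form[OF r(1)] by (intro exI[of _ r]) simp
  qed
  show "\<forall>r r'. (\<forall>i\<in>Bs. r i \<in> A i) \<longrightarrow> (\<forall>i\<in>Bs. r' i \<in> A i) \<longrightarrow>
      finsum R (\<lambda>i. r i \<otimes>\<^bsub>R\<^esub> U i) Bs = finsum R (\<lambda>i. r' i \<otimes>\<^bsub>R\<^esub> U i) Bs \<longrightarrow> (\<forall>i\<in>Bs. r i = r' i)"
  proof (intro allI impI)
    fix r r' assume r: "\<forall>i\<in>Bs. r i \<in> A i" and r': "\<forall>i\<in>Bs. r' i \<in> A i"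
      and e: "finsum R (\<lambda>i. r i \<otimes>\<^bsub>R\<^esub> U i) Bs = finsum R (\<lambda>i. r' i \<otimes>\<^bsub>R\<^esub> U i) Bs"
    show "\<forall>i\<in>Bs. r i = r' i" using uniq[OF r r'] e finsum_form[OF r] finsum_form[OF r'] by simp
  qed
qed

end


context spa begin

lemma finsum_opp: "finsum (opposite_ring R) = finsum R"
  unfolding finsum_def add_monoid_opp ..

lemma ring_opp: "ring (opposite_ring R)"
proof -
  interpret ring R by (rule ring_R)
  show ?thesis
  proof (rule ringI)
    have "abelian_group R" by (rule is_abelian_group)
    then show "abelian_group (opposite_ring R)"
      unfolding abelian_group_def abelian_monoid_def abelian_group_axioms_def add_monoid_opp .
    show "monoid (opposite_ring R)"
      by (rule monoidI) (auto simp: mult_eq mulf_C oneR_C mulf_assoc mulf_one_left mulf_one_right)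
  qed (auto simp: mult_eq add_C mulf_distl mulf_distr)
qed

end

locale spa_rideal = spa Q0 Q1 hd_q tl_q \<sigma>
  for Q0 :: "'v set" and Q1 :: "'e set" and hd_q tl_q :: "'e \<Rightarrow> 'v" and \<sigma> :: "'e \<Rightarrow> 'k::division_ring \<Rightarrow> 'k" +
  fixes I :: "('v \<times> 'e list \<Rightarrow> 'k) set"
  assumes I: "left_ideal I (opposite_ring R)"
begin

lemmas Ip = right_ideal_props[OF I]

definition Ls where "Ls = {lt x | x. x \<in> I \<and> x \<noteq> (\<lambda>p. 0)}"
definition Bs where "Bs = {q \<in> Ls. \<forall>q0\<in>Ls. RM q0 q \<longrightarrow> q0 = q}"
definition U where "U q = (SOME u. u \<in> I \<and> u \<noteq> (\<lambda>p. 0) \<and> lt u = q \<and> (\<forall>s. u s \<noteq> 0 \<longrightarrow> ptl s = ptl q))"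
definition A :: "'v \<times> 'e list \<Rightarrow> ('v \<times> 'e list \<Rightarrow> 'k) set" where
  "A q = {r \<in> C. \<forall>p. r p \<noteq> 0 \<longrightarrow> fst p = ptl q}"

lemma Ls_P: "Ls \<subseteq> P"
  unfolding Ls_def using lt(3) Ip(1) by blast

lemma Bs_Ls: "Bs \<subseteq> Ls" unfolding Bs_def by blast

lemma Bs_fin: "finite Bs"
proof (rule finite_subset[OF _ finite_P])
  show "Bs \<subseteq> P" using Bs_Ls Ls_P by (rule subset_trans)
qed

lemma B_exists: "m \<in> Ls \<Longrightarrow> \<exists>q\<in>Bs. RM q m"
proof (induction "length (snd m)" arbitrary: m rule: less_induct)
  case less
  show ?case
  proof (cases "m \<in> Bs")
    case True then show ?thesis using RM_refl Ls_P less.prems by blast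
  next
    case False
    then obtain q0 where q0: "q0 \<in> Ls" "RM q0 m" "q0 \<noteq> m" using less.prems unfolding Bs_def by blast
    then have "length (snd q0) < length (snd m)" using RM_len Ls_P by blast
    then obtain q where q: "q \<in> Bs" "RM q q0" using less.hyps q0(1) by blast
    then have "RM q m" using RM_trans q0 Bs_Ls Ls_P by blast
    then show ?thesis using q by blast
  qed
qed

lemma B_min: "q \<in> Bs \<Longrightarrow> q' \<in> Bs \<Longrightarrow> RM q q' \<Longrightarrow> q = q'"
  unfolding Bs_def by blast

lemma U_ex: assumes "q \<in> Ls" shows "\<exists>u. u \<in> I \<and> u \<noteq> (\<lambda>p. 0) \<and> lt u = q \<and> (\<forall>s. u s \<noteq> 0 \<longrightarrow> ptl s = ptl q)"
proof -
  obtain x where x: "x \<in> I" "x \<noteq> (\<lambda>p. 0)" "lt x = q" using assms unfolding Ls_def by blast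
  have xC: "x \<in> C" using x Ip(1) by blast
  have qP: "q \<in> P" using assms Ls_P by blast
  have v: "ptl q \<in> Q0" using ptl_Q0[OF qP] .
  define u where "u = mulf x (mon 1 (ptl q, []))"
  have u_eq: "u = (\<lambda>r. if ptl r = ptl q then x r else 0)"
  proof
    fix r
    have "x r * sg r 1 = x r"
    proof (cases "r \<in> P")
      case True then show ?thesis using ring_aut_1[OF sg_aut[OF True]] by simp
    next
      case False then show ?thesis using C_out[OF xC] by simp
    qed
    then show "u r = (if ptl r = ptl q then x r else 0)"
      unfolding u_def mon_triv_left mon_triv_right[OF v xC] by simp
  qed
  have uI: "u \<in> I" unfolding u_def using Ip(5) mon_C triv_P v x(1) by blast
  have uq: "u q \<noteq> 0" using u_eq lt(1)[OF xC x(2)] x(3) by simp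
  have uC: "u \<in> C" using uI Ip(1) by blast
  have "lt u = q"
    using lt_unique[OF uC uq] lt(2)[OF xC x(2)] x(3) u_eq by (metis (mono_tags, lifting))
  moreover have "\<forall>s. u s \<noteq> 0 \<longrightarrow> ptl s = ptl q" using u_eq by auto
  moreover have "u \<noteq> (\<lambda>p. 0)" using uq by auto
  ultimately show ?thesis using uI by blast
qed

lemma U: assumes "q \<in> Ls"
  shows "U q \<in> I" "U q \<noteq> (\<lambda>p. 0)" "lt (U q) = q" "\<And>s. U q s \<noteq> 0 \<Longrightarrow> ptl s = ptl q" "U q \<in> C"
proof -
  have "U q \<in> I \<and> U q \<noteq> (\<lambda>p. 0) \<and> lt (U q) = q \<and> (\<forall>s. U q s \<noteq> 0 \<longrightarrow> ptl s = ptl q)"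
    unfolding U_def using U_ex[OF assms] by (rule someI_ex)
  then show "U q \<in> I" "U q \<noteq> (\<lambda>p. 0)" "lt (U q) = q" "\<And>s. U q s \<noteq> 0 \<Longrightarrow> ptl s = ptl q" by auto
  then show "U q \<in> C" using Ip(1) by blast
qed

lemma A_C: "r \<in> A q \<Longrightarrow> r \<in> C" unfolding A_def by blast

lemma zero_A: "(\<lambda>p. 0) \<in> A q" unfolding A_def using zero_C by auto

lemma add_A: "r \<in> A q \<Longrightarrow> r' \<in> A q \<Longrightarrow> (\<lambda>p. r p + r' p) \<in> A q"
  unfolding A_def using add_C by (auto, metis add.right_neutral)

lemma diff_A: "r \<in> A q \<Longrightarrow> r' \<in> A q \<Longrightarrow> (\<lambda>p. r p - r' p) \<in> A q"
proof -
  assume a: "r \<in> A q" "r' \<in> A q"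
  have "(\<lambda>p. - r' p) \<in> A q" using a(2) neg_C unfolding A_def by auto
  then have "(\<lambda>p. r p + - r' p) \<in> A q" using add_A a(1) by blast
  then show ?thesis by simp
qed

lemma mul_A: "r \<in> A q \<Longrightarrow> c \<in> C \<Longrightarrow> mulf r c \<in> A q"
proof -
  assume r: "r \<in> A q" and c: "c \<in> C"
  have "mulf r c \<in> C" using mulf_C c A_C[OF r] by blast
  moreover have "fst p = ptl q" if nz: "mulf r c p \<noteq> 0" for p
  proof -
    obtain a s where as: "a \<in> P" "s \<in> P" "r a \<noteq> 0" "c s \<noteq> 0" "ptl a = fst s" "path_cat a s = p"
      using mulf_support[OF nz] by blast
    have "fst a = ptl q" using r as unfolding A_def by blast
    then show ?thesis using as by auto
  qed
  ultimately show ?thesis unfolding A_def by blast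
qed

lemma mul_A': "r \<in> A q \<Longrightarrow> c \<in> C \<Longrightarrow> path_alg_mult tl_q \<sigma> r c \<in> A q"
  using mul_A mult_eq A_C by metis

end


context spa_rideal begin

abbreviation Sm where "Sm r \<equiv> (\<lambda>p. \<Sum>q\<in>Bs. mulf (U q) (r q) p)"

lemma mulf_zero_right: "mulf u (\<lambda>p. 0) = (\<lambda>p. 0)"
  unfolding mulf_def using ring_aut_0[OF sg_aut] by (auto intro!: ext sum.neutral)

lemma zero_rep: "\<exists>r. (\<forall>q\<in>Bs. r q \<in> A q) \<and> (\<lambda>p. 0) = Sm r"
  by (rule exI[of _ "\<lambda>q p. 0"]) (simp add: zero_A mulf_zero_right)

lemma mon_A: "w \<in> P \<Longrightarrow> ptl q = fst w \<Longrightarrow> mon d w \<in> A q"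
  unfolding A_def using mon_C by (auto simp: mon_def)

lemma span: "x \<in> I \<Longrightarrow> \<exists>r. (\<forall>q\<in>Bs. r q \<in> A q) \<and> x = Sm r"
proof (induction "card {p\<in>P. key p \<le> key (lt x)}" arbitrary: x rule: less_induct)
  case less
  show ?case
  proof (cases "x = (\<lambda>p. 0)")
    case True then show ?thesis using zero_rep by simp
  next
    case False
    have xC: "x \<in> C" using less.prems Ip(1) by blast
    define m where "m = lt x"
    have mP: "m \<in> P" and xm: "x m \<noteq> 0" and mmax: "\<And>p. x p \<noteq> 0 \<Longrightarrow> key p \<le> key m"
      using lt[OF xC False] unfolding m_def by auto
    have mL: "m \<in> Ls" unfolding Ls_def m_def using less.prems False by blast
    obtain q where q: "q \<in> Bs" "RM q m" using B_exists[OF mL] by blast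
    obtain w where w: "w \<in> P" "ptl q = fst w" "path_cat q w = m" using q(2) unfolding RM_def by blast
    have qL: "q \<in> Ls" using q Bs_Ls by blast
    have qP: "q \<in> P" using qL Ls_P by blast
    note Uq = U[OF qL]
    have e0: "U q q \<noteq> 0" using lt(1)[OF Uq(5) Uq(2)] Uq(3) by simp
    obtain d where d: "sg q d = inverse (U q q) * x m" using ring_aut_surj[OF sg_aut[OF qP]] by blast
    have d0: "d \<noteq> 0"
    proof
      assume "d = 0"
      then have "inverse (U q q) * x m = 0" using d ring_aut_0[OF sg_aut[OF qP]] by simp
      then show False using e0 xm by simp
    qed
    define t where "t = mulf (U q) (mon d w)"
    have monC: "mon d w \<in> C" using mon_C[OF w(1)] .
    have mnz: "mon d w \<noteq> (\<lambda>p. 0)" using mon_nz[OF d0] .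
    have ltm: "lt (mon d w) = w" using lt_mon[OF w(1) d0] .
    have hr: "\<forall>p. U q p \<noteq> 0 \<longrightarrow> ptl p = ptl q" using Uq(4) by blast
    have hu: "\<forall>s. mon d w s \<noteq> 0 \<longrightarrow> fst s = ptl q" using w(2) by (auto simp: mon_def)
    note LMt = lead_mult[OF Uq(5) monC Uq(2) mnz hr hu]
    have tm: "t m = x m"
      using LMt(1) unfolding t_def ltm Uq(3) w(3) using e0 d by (simp add: mon_def mult.assoc[symmetric])
    have tle: "\<And>p. t p \<noteq> 0 \<Longrightarrow> key p \<le> key m"
      using LMt(2) unfolding t_def ltm Uq(3) w(3) by blast
    have tI: "t \<in> I" unfolding t_def using Ip(5)[OF monC Uq(1)] .
    define y where "y = (\<lambda>p. x p - t p)"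
    have yI: "y \<in> I" unfolding y_def using Ip(3)[OF less.prems tI] .
    have yC: "y \<in> C" using yI Ip(1) by blast
    have ym: "y m = 0" unfolding y_def using tm by simp
    have ysupp: "\<And>p. y p \<noteq> 0 \<Longrightarrow> key p \<le> key m \<and> p \<noteq> m"
    proof -
      fix p assume "y p \<noteq> 0"
      then have "x p \<noteq> 0 \<or> t p \<noteq> 0" unfolding y_def by auto
      then have "key p \<le> key m" using mmax tle by blast
      moreover have "p \<noteq> m" using \<open>y p \<noteq> 0\<close> ym by auto
      ultimately show "key p \<le> key m \<and> p \<noteq> m" by blast
    qed
    obtain r' where r': "\<forall>q\<in>Bs. r' q \<in> A q" "y = Sm r'"
    proof (cases "y = (\<lambda>p. 0)")
      case True
      obtain r0 where "\<forall>q\<in>Bs. r0 q \<in> A q" "(\<lambda>p. 0) = Sm r0" using zero_rep by blast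
      then show ?thesis using that[of r0] True by simp
    next
      case False
      note ly = lt[OF yC False]
      have "key (lt y) \<le> key m" "lt y \<noteq> m" using ysupp[OF ly(1)] by auto
      moreover have "key (lt y) \<noteq> key m" using key_inj[OF ly(3) mP] \<open>lt y \<noteq> m\<close> by blast
      ultimately have lty: "key (lt y) < key m" by simp
      have sub1: "{p\<in>P. key p \<le> key (lt y)} \<subseteq> {p\<in>P. key p \<le> key (lt x)}"
        using lty unfolding m_def by auto
      have "m \<in> {p\<in>P. key p \<le> key (lt x)}" "m \<notin> {p\<in>P. key p \<le> key (lt y)}"
        using lty mP unfolding m_def by auto
      then have "{p\<in>P. key p \<le> key (lt y)} \<subset> {p\<in>P. key p \<le> key (lt x)}"
        using sub1 by blast
      then have "card {p\<in>P. key p \<le> key (lt y)} < card {p\<in>P. key p \<le> key (lt x)}"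
        using finite_P by (intro psubset_card_mono) auto
      then obtain r0 where "\<forall>q\<in>Bs. r0 q \<in> A q" "y = Sm r0" using less.hyps[OF _ yI] by blast
      then show ?thesis using that by blast
    qed
    define r where "r = r'(q := (\<lambda>p. r' q p + mon d w p))"
    have "(\<lambda>p. r' q p + mon d w p) \<in> A q" using add_A[OF _ mon_A[OF w(1,2)]] r'(1) q(1) by blast
    then have rA: "\<forall>q'\<in>Bs. r q' \<in> A q'"
      unfolding r_def using r'(1) by auto
    have "x = Sm r"
    proof
      fix p
      have "Sm r p = (\<Sum>i\<in>Bs. mulf (U i) (r' i) p + (if i = q then t p else 0))"
      proof (intro sum.cong refl)
        fix i assume "i \<in> Bs"
        show "mulf (U i) (r i) p = mulf (U i) (r' i) p + (if i = q then t p else 0)"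
          unfolding r_def t_def by (cases "i = q") (simp_all add: mulf_add_right)
      qed
      also have "\<dots> = Sm r' p + t p" using q(1) Bs_fin by (simp add: sum.distrib)
      also have "\<dots> = x p" using r'(2) unfolding y_def by (metis diff_add_cancel)
      finally show "x p = Sm r p" by simp
    qed
    then show ?thesis using rA by blast
  qed
qed

lemma uniq:
  assumes r: "\<forall>q\<in>Bs. r q \<in> A q" and r': "\<forall>q\<in>Bs. r' q \<in> A q" and eq: "Sm r = Sm r'"
  shows "\<forall>q\<in>Bs. r q = r' q"
proof -
  define \<delta> where "\<delta> q = (\<lambda>p. r q p - r' q p)" for q
  have \<delta>A: "\<And>q. q \<in> Bs \<Longrightarrow> \<delta> q \<in> A q" unfolding \<delta>_def using r r' diff_A by blast
  have S0: "(\<Sum>q\<in>Bs. mulf (U q) (\<delta> q) p) = 0" for p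
  proof -
    have "(\<Sum>q\<in>Bs. mulf (U q) (\<delta> q) p) = Sm r p - Sm r' p"
      unfolding \<delta>_def mulf_diff_right by (simp add: sum_subtractf)
    moreover have "Sm r p = Sm r' p" using fun_cong[OF eq, of p] by simp
    ultimately show ?thesis by simp
  qed
  have all0: "\<forall>q\<in>Bs. \<delta> q = (\<lambda>p. 0)"
  proof (rule ccontr)
    assume neg: "\<not> (\<forall>q\<in>Bs. \<delta> q = (\<lambda>p. 0))"
    define Q' where "Q' = {q\<in>Bs. \<delta> q \<noteq> (\<lambda>p. 0)}"
    have Q'ne: "Q' \<noteq> {}" using neg unfolding Q'_def by blast
    have Q'fin: "finite Q'" using Bs_fin unfolding Q'_def by simp
    define M where "M q = path_cat q (lt (\<delta> q))" for q
    have "Max (key ` M ` Q') \<in> key ` M ` Q'" using Q'ne Q'fin by simp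
    then obtain i where i: "i \<in> Q'" "key (M i) = Max (key ` M ` Q')" by auto
    have imax: "\<And>j. j \<in> Q' \<Longrightarrow> key (M j) \<le> key (M i)" using i Q'fin by simp
    have lead: "mulf (U j) (\<delta> j) (M j) \<noteq> 0" "\<And>p. mulf (U j) (\<delta> j) p \<noteq> 0 \<Longrightarrow> key p \<le> key (M j)" "M j \<in> P"
      "ptl j = fst (lt (\<delta> j))" "lt (\<delta> j) \<in> P" "j \<in> P"
      if j: "j \<in> Q'" for j
    proof -
      have jB: "j \<in> Bs" and jnz: "\<delta> j \<noteq> (\<lambda>p. 0)" using j unfolding Q'_def by auto
      have jL: "j \<in> Ls" using jB Bs_Ls by blast
      have dC: "\<delta> j \<in> C" using A_C[OF \<delta>A[OF jB]] .
      have hu: "\<forall>p. \<delta> j p \<noteq> 0 \<longrightarrow> fst p = ptl j" using \<delta>A[OF jB] unfolding A_def by blast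
      have hr: "\<forall>s. U j s \<noteq> 0 \<longrightarrow> ptl s = ptl j" using U(4)[OF jL] by blast
      note L = lead_mult[OF U(5)[OF jL] dC U(2)[OF jL] jnz hr hu]
      show "mulf (U j) (\<delta> j) (M j) \<noteq> 0" using L(1,3) unfolding M_def U(3)[OF jL] by simp
      show "\<And>p. mulf (U j) (\<delta> j) p \<noteq> 0 \<Longrightarrow> key p \<le> key (M j)" using L(2) unfolding M_def U(3)[OF jL] by blast
      show "M j \<in> P" using L(4) unfolding M_def U(3)[OF jL] .
      show "ptl j = fst (lt (\<delta> j))" using hu lt(1)[OF dC jnz] by metis
      show "lt (\<delta> j) \<in> P" using lt(3)[OF dC jnz] .
      show "j \<in> P" using jL Ls_P by blast
    qed
    have iB: "i \<in> Bs" using i unfolding Q'_def by simp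
    have others: "mulf (U j) (\<delta> j) (M i) = 0" if j: "j \<in> Bs - {i}" for j
    proof (cases "\<delta> j = (\<lambda>p. 0)")
      case True
      then show ?thesis using mulf_zero_right by simp
    next
      case False
      then have jQ: "j \<in> Q'" using j unfolding Q'_def by simp
      show ?thesis
      proof (rule ccontr)
        assume "mulf (U j) (\<delta> j) (M i) \<noteq> 0"
        then have "key (M i) \<le> key (M j)" using lead(2)[OF jQ] by blast
        then have "key (M i) = key (M j)" using imax[OF jQ] by simp
        then have "M i = M j" using key_inj lead(3)[OF jQ] lead(3)[OF i(1)] by blast
        then have "RM i j \<or> RM j i"
          using RM_comparable[OF lead(5)[OF i(1)] lead(5)[OF jQ] lead(6)[OF i(1)] lead(6)[OF jQ] lead(4)[OF i(1)] lead(4)[OF jQ]]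
          unfolding M_def by blast
        then have "i = j" using B_min iB j by blast
        then show False using j by simp
      qed
    qed
    have "(\<Sum>q\<in>Bs. mulf (U q) (\<delta> q) (M i)) = mulf (U i) (\<delta> i) (M i) + (\<Sum>q\<in>Bs - {i}. mulf (U q) (\<delta> q) (M i))"
      by (rule sum.remove[OF Bs_fin iB])
    also have "\<dots> = mulf (U i) (\<delta> i) (M i)" using others by simp
    finally show False using S0 lead(1)[OF i(1)] by simp
  qed
  show ?thesis
  proof
    fix q assume "q \<in> Bs"
    then have "\<delta> q = (\<lambda>p. 0)" using all0 by blast
    then have "\<And>p. r q p - r' q p = 0" unfolding \<delta>_def by meson
    then show "r q = r' q" by (intro ext) simp
  qed
qed

lemma finsum_form: "\<forall>i\<in>Bs. r i \<in> A i \<Longrightarrow> finsum (opposite_ring R) (\<lambda>i. r i \<otimes>\<^bsub>opposite_ring R\<^esub> U i) Bs = Sm r"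
proof -
  assume rA: "\<forall>i\<in>Bs. r i \<in> A i"
  have UC: "\<And>i. i \<in> Bs \<Longrightarrow> U i \<in> C" using U(5) Bs_Ls by blast
  have "(\<lambda>i. r i \<otimes>\<^bsub>opposite_ring R\<^esub> U i) \<in> Bs \<rightarrow> C"
  proof
    fix i assume i: "i \<in> Bs"
    have "r i \<in> C" using rA i A_C by blast
    then show "r i \<otimes>\<^bsub>opposite_ring R\<^esub> U i \<in> C" using UC[OF i] mult_eq mulf_C by simp
  qed
  then have "finsum (opposite_ring R) (\<lambda>i. r i \<otimes>\<^bsub>opposite_ring R\<^esub> U i) Bs = (\<lambda>p. \<Sum>i\<in>Bs. (r i \<otimes>\<^bsub>opposite_ring R\<^esub> U i) p)"
    unfolding finsum_opp using finsum_eval Bs_fin by blast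
  also have "\<dots> = Sm r"
  proof (intro ext sum.cong refl)
    fix p i assume i: "i \<in> Bs"
    have "r i \<in> C" using rA i A_C by blast
    then show "(r i \<otimes>\<^bsub>opposite_ring R\<^esub> U i) p = mulf (U i) (r i) p" using UC[OF i] mult_eq by simp
  qed
  finally show ?thesis .
qed

lemma right_proj: "projective_lmod (opposite_ring R) (ideal_lmod (opposite_ring R) I) TYPE('m) TYPE('n)"
proof (rule proj_from_decomp[OF ring_opp I Bs_fin, of U A])
  show "\<forall>i\<in>Bs. U i \<in> I" using U(1) Bs_Ls by blast
  show "\<forall>i\<in>Bs. A i \<subseteq> carrier (opposite_ring R)" using A_C by auto
  show "\<forall>i\<in>Bs. \<forall>a\<in>A i. \<forall>b\<in>A i. a \<oplus>\<^bsub>opposite_ring R\<^esub> b \<in> A i" by (auto intro!: add_A)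
  show "\<forall>i\<in>Bs. \<forall>a\<in>A i. \<forall>c\<in>carrier (opposite_ring R). c \<otimes>\<^bsub>opposite_ring R\<^esub> a \<in> A i"
  proof (intro ballI)
    fix i a c
    assume h: "i \<in> Bs" "a \<in> A i" "c \<in> carrier (opposite_ring R)"
    show "c \<otimes>\<^bsub>opposite_ring R\<^esub> a \<in> A i" using mul_A'[OF h(2)] h(3) by simp
  qed
  show "\<forall>x\<in>I. \<exists>r. (\<forall>i\<in>Bs. r i \<in> A i) \<and> x = finsum (opposite_ring R) (\<lambda>i. r i \<otimes>\<^bsub>opposite_ring R\<^esub> U i) Bs"
  proof
    fix x assume "x \<in> I"
    then obtain r where r: "\<forall>i\<in>Bs. r i \<in> A i" "x = Sm r" using span by blast
    then show "\<exists>r. (\<forall>i\<in>Bs. r i \<in> A i) \<and> x = finsum (opposite_ring R) (\<lambda>i. r i \<otimes>\<^bsub>opposite_ring R\<^esub> U i) Bs"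
      using finsum_form[OF r(1)] by (intro exI[of _ r]) simp
  qed
  show "\<forall>r r'. (\<forall>i\<in>Bs. r i \<in> A i) \<longrightarrow> (\<forall>i\<in>Bs. r' i \<in> A i) \<longrightarrow>
      finsum (opposite_ring R) (\<lambda>i. r i \<otimes>\<^bsub>opposite_ring R\<^esub> U i) Bs = finsum (opposite_ring R) (\<lambda>i. r' i \<otimes>\<^bsub>opposite_ring R\<^esub> U i) Bs \<longrightarrow> (\<forall>i\<in>Bs. r i = r' i)"
  proof (intro allI impI)
    fix r r' assume r: "\<forall>i\<in>Bs. r i \<in> A i" and r': "\<forall>i\<in>Bs. r' i \<in> A i"
      and e: "finsum (opposite_ring R) (\<lambda>i. r i \<otimes>\<^bsub>opposite_ring R\<^esub> U i) Bs = finsum (opposite_ring R) (\<lambda>i. r' i \<otimes>\<^bsub>opposite_ring R\<^esub> U i) Bs"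
    show "\<forall>i\<in>Bs. r i = r' i" using uniq[OF r r'] e finsum_form[OF r] finsum_form[OF r'] by simp
  qed
qed

end


lemma ring_K: "ring (\<lparr>carrier = UNIV, mult = (*), one = 1, zero = 0, add = (+)\<rparr> :: 'k::division_ring ring)"
proof (rule ringI)
  show "abelian_group (\<lparr>carrier = UNIV, mult = (*), one = 1, zero = 0, add = (+)\<rparr> :: 'k ring)"
    by (rule abelian_groupI) (auto simp: add.assoc add.commute intro: exI[of _ "- x" for x])
  show "monoid (\<lparr>carrier = UNIV, mult = (*), one = 1, zero = 0, add = (+)\<rparr> :: 'k ring)"
    by (rule monoidI) (auto simp: mult.assoc)
qed (auto simp: distrib_left distrib_right)

context spa begin

lemma scal_C: "path_alg_scalar Q0 c \<in> C"
  unfolding C_iff path_alg_scalar_def using triv_P by (auto simp: prod_eq_iff)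

lemma mulf_scal_left: assumes x: "x \<in> C" shows "mulf (path_alg_scalar Q0 c) x = (\<lambda>r. c * x r)"
proof
  fix r
  have "mulf (path_alg_scalar Q0 c) x r = (\<Sum>p\<in>P. \<Sum>s\<in>P. if p = (fst s, []) \<and> s = r then c * x s else 0)"
    unfolding mulf_def
  proof (intro sum.cong refl)
    fix p s assume p: "p \<in> P" and s: "s \<in> P"
    show "(if ptl p = fst s \<and> path_cat p s = r then path_alg_scalar Q0 c p * sg p (x s) else 0) =
          (if p = (fst s, []) \<and> s = r then c * x s else 0)"
    proof (cases "snd p = []")
      case True
      then obtain v where pv: "p = (v, [])" by (cases p) auto
      then have "v \<in> Q0" using p triv_P by simp
      then show ?thesis using pv cat_triv_left[of s v] sg_triv[of p] unfolding path_alg_scalar_def by auto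
    next
      case False
      then show ?thesis unfolding path_alg_scalar_def by auto
    qed
  qed
  also have "\<dots> = (\<Sum>s\<in>P. \<Sum>p\<in>P. if p = (fst s, []) \<and> s = r then c * x s else 0)"
    by (rule sum.swap)
  also have "\<dots> = (\<Sum>s\<in>P. if s = r then c * x s else 0)"
  proof (intro sum.cong refl)
    fix s assume s: "s \<in> P"
    then have "(fst s, []) \<in> P" using triv_P P_fst by blast
    then show "(\<Sum>p\<in>P. if p = (fst s, []) \<and> s = r then c * x s else 0) = (if s = r then c * x s else 0)"
      using finite_P by (cases "s = r") (simp_all add: sum.delta')
  qed
  also have "\<dots> = c * x r"
    using finite_P C_out[OF x] by (cases "r \<in> P") (simp_all add: sum.delta')
  finally show "mulf (path_alg_scalar Q0 c) x r = c * x r" .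
qed

lemma scal_hom: "ring_hom_ring (\<lparr>carrier = UNIV, mult = (*), one = 1, zero = 0, add = (+)\<rparr> :: 'k ring) R (path_alg_scalar Q0)"
proof (rule ring_hom_ringI[OF ring_K ring_R])
  show "\<And>x. x \<in> carrier (\<lparr>carrier = UNIV, mult = (*), one = 1, zero = 0, add = (+)\<rparr> :: 'k ring) \<Longrightarrow> path_alg_scalar Q0 x \<in> carrier R"
    using scal_C by simp
  show "\<And>x y. x \<in> carrier (\<lparr>carrier = UNIV, mult = (*), one = 1, zero = 0, add = (+)\<rparr> :: 'k ring) \<Longrightarrow>
           y \<in> carrier (\<lparr>carrier = UNIV, mult = (*), one = 1, zero = 0, add = (+)\<rparr> :: 'k ring) \<Longrightarrow>
           path_alg_scalar Q0 (x \<otimes>\<^bsub>\<lparr>carrier = UNIV, mult = (*), one = 1, zero = 0, add = (+)\<rparr>\<^esub> y) =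
           path_alg_scalar Q0 x \<otimes>\<^bsub>R\<^esub> path_alg_scalar Q0 y"
  proof -
    fix x y :: 'k
    have "path_alg_scalar Q0 x \<otimes>\<^bsub>R\<^esub> path_alg_scalar Q0 y = mulf (path_alg_scalar Q0 x) (path_alg_scalar Q0 y)"
      using mult_eq[OF scal_C scal_C] by simp
    also have "\<dots> = (\<lambda>r. x * path_alg_scalar Q0 y r)" by (rule mulf_scal_left[OF scal_C])
    also have "\<dots> = path_alg_scalar Q0 (x * y)" by (auto simp: path_alg_scalar_def)
    finally show "path_alg_scalar Q0 (x \<otimes>\<^bsub>\<lparr>carrier = UNIV, mult = (*), one = 1, zero = 0, add = (+)\<rparr>\<^esub> y) =
           path_alg_scalar Q0 x \<otimes>\<^bsub>R\<^esub> path_alg_scalar Q0 y" by simp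
  qed
  show "\<And>x y. x \<in> carrier (\<lparr>carrier = UNIV, mult = (*), one = 1, zero = 0, add = (+)\<rparr> :: 'k ring) \<Longrightarrow>
           y \<in> carrier (\<lparr>carrier = UNIV, mult = (*), one = 1, zero = 0, add = (+)\<rparr> :: 'k ring) \<Longrightarrow>
           path_alg_scalar Q0 (x \<oplus>\<^bsub>\<lparr>carrier = UNIV, mult = (*), one = 1, zero = 0, add = (+)\<rparr>\<^esub> y) =
           path_alg_scalar Q0 x \<oplus>\<^bsub>R\<^esub> path_alg_scalar Q0 y"
    by (auto simp: path_alg_scalar_def)
  show "path_alg_scalar Q0 \<one>\<^bsub>\<lparr>carrier = UNIV, mult = (*), one = 1, zero = 0, add = (+)\<rparr>\<^esub> = \<one>\<^bsub>R\<^esub>"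
    by (auto simp: path_alg_scalar_def oneR_def)
qed

end

theorem proposition5p13:
  fixes Q0 :: "'v set" and Q1 :: "'e set" and hd_q tl_q :: "'e \<Rightarrow> 'v"
    and \<sigma> :: "'e \<Rightarrow> 'k::division_ring \<Rightarrow> 'k"
  assumes "finite_quiver Q0 Q1 hd_q tl_q"
    and "\<forall>a\<in>Q1. ring_automorphism (\<sigma> a)"
    and "acyclic_quiver Q1 hd_q tl_q"
  shows "ring (semilinear_path_algebra Q0 Q1 hd_q tl_q \<sigma>)
    \<and> ring_hom_ring (\<lparr>carrier = UNIV, mult = (*), one = 1, zero = 0, add = (+)\<rparr> :: 'k ring)
         (semilinear_path_algebra Q0 Q1 hd_q tl_q \<sigma>) (path_alg_scalar Q0)
    \<and> hereditary (semilinear_path_algebra Q0 Q1 hd_q tl_q \<sigma>) TYPE('m) TYPE('n)"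
proof -
  interpret spa Q0 Q1 hd_q tl_q \<sigma> using assms by (rule spa.intro)
  have L: "left_hereditary R TYPE('m) TYPE('n)"
    unfolding left_hereditary_def
  proof (intro conjI allI impI)
    show "ring R" by (rule ring_R)
    fix I assume "left_ideal I R"
    then interpret spa_lideal Q0 Q1 hd_q tl_q \<sigma> I by (intro spa_lideal.intro spa_lideal_axioms.intro spa_axioms)
    show "projective_lmod R (ideal_lmod R I) TYPE('m) TYPE('n)" by (rule left_proj)
  qed
  have Rr: "left_hereditary (opposite_ring R) TYPE('m) TYPE('n)"
    unfolding left_hereditary_def
  proof (intro conjI allI impI)
    show "ring (opposite_ring R)" by (rule ring_opp)
    fix I assume "left_ideal I (opposite_ring R)"
    then interpret spa_rideal Q0 Q1 hd_q tl_q \<sigma> I by (intro spa_rideal.intro spa_rideal_axioms.intro spa_axioms)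
    show "projective_lmod (opposite_ring R) (ideal_lmod (opposite_ring R) I) TYPE('m) TYPE('n)" by (rule right_proj)
  qed
  show ?thesis using ring_R scal_hom L Rr unfolding hereditary_def by blast
qed


end
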